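(* (a) Let $\psi:\Sigma\to\mathbb{H}^2\times\mathbb{R}$ be a conformal immersion of a connected Riemann surface with regular vertical projection and constant mean curvature $1/2$ with respect to its canonical orientation, whose hyperbolic Gauss map $G$ is conformal, i.e. $\langle G_z,G_z\rangle\equiv0$. Then there exist $a\in\mathbb{H}^2$ and $c\in\mathbb{R}$ with $$\psi=(-a,c)-2\langle a,G\rangle\,(G,1)\qquad\text{in }\mathbb{L}^4=\mathbb{L}^3\times\mathbb{R}.$$ (b) Conversely, if $G:\Sigma\to\mathbb{H}^2$ is a conformal immersion and $a\in\mathbb{H}^2$, then $\psi=(-a,0)-2\langle a,G\rangle(G,1)$ is a conformal immersion into $\mathbb{H}^2\times\mathbb{R}$ with regular vertical projection, constant mean curvature $1/2$ with respect to its canonical orientation, and hyperbolic Gauss map $G$.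
   Context: $\mathbb{L}^4=(\mathbb{R}^4,\langle,\rangle=-dx_0^2+dx_1^2+dx_2^2+dx_3^2)$, $\mathbb{L}^3$ the first three coordinates, $\mathbb{H}^2=\{x\in\mathbb{L}^3:\langle x,x\rangle=-1,x_0>0\}$, $\mathbb{H}^2\times\mathbb{R}\subset\mathbb{L}^4$. For $\psi=(N,h)$: $\eta=(\hat N,u)$ is the unit normal tangent to $\mathbb{H}^2\times\mathbb{R}$, $u$ the angle function; regular vertical projection means $u\ne0$ everywhere, canonical orientation $u>0$; hyperbolic Gauss map $G:\Sigma\to\mathbb{H}^2$ defined by $(G,1)=(\eta+N)/u$. *)

theory Defs
  imports "HOL-Analysis.Analysis"
begin

type_synonym L3 = "real \<times> real \<times> real"
type_synonym L4 = "L3 \<times> real"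

definition lor3 :: "L3 \<Rightarrow> L3 \<Rightarrow> real" where
  "lor3 x y = - fst x * fst y + fst (snd x) * fst (snd y) + snd (snd x) * snd (snd y)"

definition lor4 :: "L4 \<Rightarrow> L4 \<Rightarrow> real" where
  "lor4 x y = lor3 (fst x) (fst y) + snd x * snd y"

definition H2 :: "L3 set" where
  "H2 = {x. lor3 x x = -1 \<and> fst x > 0}"

definition riemann_surface :: "('a::t2_space set \<times> ('a \<Rightarrow> complex)) set \<Rightarrow> bool" where
  "riemann_surface A \<longleftrightarrow>
     (\<forall>(U,\<phi>)\<in>A. open U \<and> open (\<phi> ` U) \<and> inj_on \<phi> U \<and> continuous_on U \<phi>
                 \<and> continuous_on (\<phi> ` U) (the_inv_into U \<phi>)) \<and>
     (\<Union>(U,\<phi>)\<in>A. U) = UNIV \<and>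
     (\<forall>(U,\<phi>)\<in>A. \<forall>(V,\<kappa>)\<in>A. (\<kappa> \<circ> the_inv_into U \<phi>) holomorphic_on (\<phi> ` (U \<inter> V)))"

definition loc :: "('a \<Rightarrow> 'b) \<Rightarrow> 'a set \<Rightarrow> ('a \<Rightarrow> complex) \<Rightarrow> complex \<Rightarrow> 'b" where
  "loc F U \<phi> = F \<circ> the_inv_into U \<phi>"

definition pd :: "complex \<Rightarrow> (complex \<Rightarrow> 'b::real_normed_vector) \<Rightarrow> complex \<Rightarrow> 'b" where
  "pd d f z = frechet_derivative f (at z) d"

text \<open>z = u + i v; pd 1 is the u-derivative, pd i the v-derivative.\<close>

fun iter_pd :: "complex list \<Rightarrow> (complex \<Rightarrow> 'b::real_normed_vector) \<Rightarrow> complex \<Rightarrow> 'b" where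
  "iter_pd [] f = f"
| "iter_pd (d # ds) f = pd d (iter_pd ds f)"

definition smooth_on :: "complex set \<Rightarrow> (complex \<Rightarrow> 'b::real_normed_vector) \<Rightarrow> bool" where
  "smooth_on \<Omega> f \<longleftrightarrow> (\<forall>ds. iter_pd ds f differentiable_on \<Omega>)"

definition lap :: "(complex \<Rightarrow> 'b::real_normed_vector) \<Rightarrow> complex \<Rightarrow> 'b" where
  "lap f z = pd 1 (pd 1 f) z + pd \<i> (pd \<i> f) z"

definition conformal_immersion_H2R ::
    "('a::t2_space set \<times> ('a \<Rightarrow> complex)) set \<Rightarrow> ('a \<Rightarrow> L4) \<Rightarrow> bool" where
  "conformal_immersion_H2R A \<psi> \<longleftrightarrow>
     (\<forall>p. fst (\<psi> p) \<in> H2) \<and>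
     (\<forall>(U,\<phi>)\<in>A. smooth_on (\<phi> ` U) (loc \<psi> U \<phi>) \<and>
        (\<forall>z\<in>\<phi> ` U. let f = loc \<psi> U \<phi> in
            lor4 (pd 1 f z) (pd 1 f z) = lor4 (pd \<i> f z) (pd \<i> f z)
          \<and> lor4 (pd 1 f z) (pd \<i> f z) = 0
          \<and> lor4 (pd 1 f z) (pd 1 f z) > 0))"

text \<open>eta is a unit normal of the local representation f at z, tangent to H2 x R
  (orthogonal to the normal (N,0) of H2 x R in L4).\<close>
definition unit_normal :: "(complex \<Rightarrow> L4) \<Rightarrow> complex \<Rightarrow> L4 \<Rightarrow> bool" where
  "unit_normal f z \<eta> \<longleftrightarrow>
     lor4 \<eta> (pd 1 f z) = 0 \<and> lor4 \<eta> (pd \<i> f z) = 0 \<and>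
     lor4 \<eta> (fst (f z), 0) = 0 \<and> lor4 \<eta> \<eta> = 1"

text \<open>Regular vertical projection: the angle function u (last coordinate of eta) never vanishes.\<close>
definition regular_vertical_projection ::
    "('a::t2_space set \<times> ('a \<Rightarrow> complex)) set \<Rightarrow> ('a \<Rightarrow> L4) \<Rightarrow> bool" where
  "regular_vertical_projection A \<psi> \<longleftrightarrow>
     (\<forall>(U,\<phi>)\<in>A. \<forall>z\<in>\<phi> ` U. \<forall>\<eta>. unit_normal (loc \<psi> U \<phi>) z \<eta> \<longrightarrow> snd \<eta> \<noteq> 0)"

definition mean_curv :: "(complex \<Rightarrow> L4) \<Rightarrow> complex \<Rightarrow> L4 \<Rightarrow> real" where
  "mean_curv f z \<eta> = lor4 (lap f z) \<eta> / (2 * lor4 (pd 1 f z) (pd 1 f z))"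

text \<open>Constant mean curvature H0 with respect to the canonical orientation (u > 0).\<close>
definition cmc_canonical ::
    "('a::t2_space set \<times> ('a \<Rightarrow> complex)) set \<Rightarrow> ('a \<Rightarrow> L4) \<Rightarrow> real \<Rightarrow> bool" where
  "cmc_canonical A \<psi> H0 \<longleftrightarrow>
     (\<forall>(U,\<phi>)\<in>A. \<forall>z\<in>\<phi> ` U. \<forall>\<eta>. unit_normal (loc \<psi> U \<phi>) z \<eta> \<and> snd \<eta> > 0
         \<longrightarrow> mean_curv (loc \<psi> U \<phi>) z \<eta> = H0)"

definition hyperbolic_gauss_map ::
    "('a::t2_space set \<times> ('a \<Rightarrow> complex)) set \<Rightarrow> ('a \<Rightarrow> L4) \<Rightarrow> ('a \<Rightarrow> L3) \<Rightarrow> bool" where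
  "hyperbolic_gauss_map A \<psi> G \<longleftrightarrow>
     (\<forall>(U,\<phi>)\<in>A. \<forall>p\<in>U. \<forall>\<eta>. unit_normal (loc \<psi> U \<phi>) (\<phi> p) \<eta> \<and> snd \<eta> > 0
         \<longrightarrow> (G p, 1) = (1 / snd \<eta>) *\<^sub>R (\<eta> + (fst (\<psi> p), 0)))"

text \<open>G : Sigma -> H2 (smooth) is conformal: <G_z,G_z> = 0, i.e. <G_u,G_u> = <G_v,G_v>, <G_u,G_v> = 0.\<close>
definition conformal_H2 ::
    "('a::t2_space set \<times> ('a \<Rightarrow> complex)) set \<Rightarrow> ('a \<Rightarrow> L3) \<Rightarrow> bool" where
  "conformal_H2 A G \<longleftrightarrow>
     (\<forall>p. G p \<in> H2) \<and>
     (\<forall>(U,\<phi>)\<in>A. smooth_on (\<phi> ` U) (loc G U \<phi>) \<and>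
        (\<forall>z\<in>\<phi> ` U. let g = loc G U \<phi> in
            lor3 (pd 1 g z) (pd 1 g z) = lor3 (pd \<i> g z) (pd \<i> g z)
          \<and> lor3 (pd 1 g z) (pd \<i> g z) = 0))"

definition conformal_immersion_H2 ::
    "('a::t2_space set \<times> ('a \<Rightarrow> complex)) set \<Rightarrow> ('a \<Rightarrow> L3) \<Rightarrow> bool" where
  "conformal_immersion_H2 A G \<longleftrightarrow>
     conformal_H2 A G \<and>
     (\<forall>(U,\<phi>)\<in>A. \<forall>z\<in>\<phi> ` U. lor3 (pd 1 (loc G U \<phi>) z) (pd 1 (loc G U \<phi>) z) > 0)"

end

theory Submission
  imports Defs
begin

lemma lor3_sym: "lor3 x y = lor3 y x" by (simp add: lor3_def algebra_simps)
lemma lor4_sym: "lor4 x y = lor4 y x" by (simp add: lor4_def lor3_sym algebra_simps)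

lemma lor3_add1[simp]: "lor3 (x+y) z = lor3 x z + lor3 y z" by (simp add: lor3_def algebra_simps)
lemma lor3_add2[simp]: "lor3 z (x+y) = lor3 z x + lor3 z y" by (simp add: lor3_def algebra_simps)
lemma lor3_diff1[simp]: "lor3 (x-y) z = lor3 x z - lor3 y z" by (simp add: lor3_def algebra_simps)
lemma lor3_diff2[simp]: "lor3 z (x-y) = lor3 z x - lor3 z y" by (simp add: lor3_def algebra_simps)
lemma lor3_minus1[simp]: "lor3 (-x) z = - lor3 x z" by (simp add: lor3_def algebra_simps)
lemma lor3_minus2[simp]: "lor3 z (-x) = - lor3 z x" by (simp add: lor3_def algebra_simps)
lemma lor3_scale1[simp]: "lor3 (c *\<^sub>R x) z = c * lor3 x z" by (simp add: lor3_def algebra_simps)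
lemma lor3_scale2[simp]: "lor3 z (c *\<^sub>R x) = c * lor3 z x" by (simp add: lor3_def algebra_simps)
lemma lor3_zero1[simp]: "lor3 0 z = 0" by (simp add: lor3_def)
lemma lor3_zero2[simp]: "lor3 z 0 = 0" by (simp add: lor3_def)

lemma lor4_pair[simp]: "lor4 (a,b) (c,d) = lor3 a c + b * d" by (simp add: lor4_def)
lemma lor4_add1[simp]: "lor4 (x+y) z = lor4 x z + lor4 y z" by (simp add: lor4_def algebra_simps)
lemma lor4_add2[simp]: "lor4 z (x+y) = lor4 z x + lor4 z y" by (simp add: lor4_def algebra_simps)
lemma lor4_diff1[simp]: "lor4 (x-y) z = lor4 x z - lor4 y z" by (simp add: lor4_def algebra_simps)
lemma lor4_diff2[simp]: "lor4 z (x-y) = lor4 z x - lor4 z y" by (simp add: lor4_def algebra_simps)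
lemma lor4_minus1[simp]: "lor4 (-x) z = - lor4 x z" by (simp add: lor4_def algebra_simps)
lemma lor4_minus2[simp]: "lor4 z (-x) = - lor4 z x" by (simp add: lor4_def algebra_simps)
lemma lor4_scale1[simp]: "lor4 (c *\<^sub>R x) z = c * lor4 x z" by (simp add: lor4_def algebra_simps)
lemma lor4_scale2[simp]: "lor4 z (c *\<^sub>R x) = c * lor4 z x" by (simp add: lor4_def algebra_simps)
lemma lor4_zero1[simp]: "lor4 0 z = 0" by (simp add: lor4_def)
lemma lor4_zero2[simp]: "lor4 z 0 = 0" by (simp add: lor4_def)

lemma lor4_sum1: "finite S \<Longrightarrow> lor4 (\<Sum>b\<in>S. f b) z = (\<Sum>b\<in>S. lor4 (f b) z)"
  by (induction S rule: finite_induct) auto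

lemma bilinear_lor3: "bilinear lor3"
  unfolding bilinear_def by (simp add: linear_iff)
lemma bilinear_lor4: "bilinear lor4"
  unfolding bilinear_def by (simp add: linear_iff)
lemma bb_lor3: "bounded_bilinear lor3"
  using bilinear_lor3 bilinear_conv_bounded_bilinear by blast
lemma bb_lor4: "bounded_bilinear lor4"
  using bilinear_lor4 bilinear_conv_bounded_bilinear by blast

lemma DIM_L4: "DIM(L4) = 4" by simp

lemma basis4:
  fixes b1 b2 b3 b4 x :: L4
  assumes o12: "lor4 b1 b2 = 0" and o13: "lor4 b1 b3 = 0" and o14: "lor4 b1 b4 = 0"
    and o23: "lor4 b2 b3 = 0" and o24: "lor4 b2 b4 = 0" and o34: "lor4 b3 b4 = 0"
    and n1: "lor4 b1 b1 \<noteq> 0" and n2: "lor4 b2 b2 \<noteq> 0"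
    and n3: "lor4 b3 b3 \<noteq> 0" and n4: "lor4 b4 b4 \<noteq> 0"
  shows "x = (lor4 x b1 / lor4 b1 b1) *\<^sub>R b1 + (lor4 x b2 / lor4 b2 b2) *\<^sub>R b2
           + (lor4 x b3 / lor4 b3 b3) *\<^sub>R b3 + (lor4 x b4 / lor4 b4 b4) *\<^sub>R b4"
proof -
  have d: "b1 \<noteq> b2" "b1 \<noteq> b3" "b1 \<noteq> b4" "b2 \<noteq> b3" "b2 \<noteq> b4" "b3 \<noteq> b4"
    using assms by auto
  define B where "B = {b1,b2,b3,b4}"
  have fin: "finite B" by (simp add: B_def)
  have card: "card B = 4" using d by (simp add: B_def)
  have sym: "lor4 b2 b1 = 0" "lor4 b3 b1 = 0" "lor4 b4 b1 = 0" "lor4 b3 b2 = 0" "lor4 b4 b2 = 0" "lor4 b4 b3 = 0"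
    using assms lor4_sym by metis+
  have sumB: "(\<Sum>v\<in>B. F v) = F b1 + F b2 + F b3 + F b4" for F :: "L4 \<Rightarrow> 'z::comm_monoid_add"
    using d by (simp add: B_def add.assoc)
  have ind: "independent B"
    unfolding independent_explicit
  proof (intro conjI allI impI ballI fin)
    fix c v assume s: "(\<Sum>v\<in>B. c v *\<^sub>R v) = 0" and v: "v \<in> B"
    have "lor4 (\<Sum>v\<in>B. c v *\<^sub>R v) v = 0" using s by simp
    then have "c b1 * lor4 b1 v + c b2 * lor4 b2 v + c b3 * lor4 b3 v + c b4 * lor4 b4 v = 0"
      by (simp add: sumB)
    then show "c v = 0" using v assms sym by (auto simp: B_def)
  qed
  have "UNIV \<subseteq> span B"
    using card_eq_dim[of B UNIV] fin card ind by simp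
  then obtain u where u: "x = (\<Sum>v\<in>B. u v *\<^sub>R v)"
    using span_finite[OF fin] by auto
  have c: "lor4 x bj = u bj * lor4 bj bj" if "bj \<in> B" for bj
  proof -
    have "lor4 x bj = u b1 * lor4 b1 bj + u b2 * lor4 b2 bj + u b3 * lor4 b3 bj + u b4 * lor4 b4 bj"
      by (simp add: u sumB)
    then show ?thesis using that assms sym by (auto simp: B_def)
  qed
  have "x = u b1 *\<^sub>R b1 + u b2 *\<^sub>R b2 + u b3 *\<^sub>R b3 + u b4 *\<^sub>R b4"
    using u by (simp add: sumB)
  moreover have "u b1 = lor4 x b1 / lor4 b1 b1" "u b2 = lor4 x b2 / lor4 b2 b2"
     "u b3 = lor4 x b3 / lor4 b3 b3" "u b4 = lor4 x b4 / lor4 b4 b4"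
    using c[of b1] c[of b2] c[of b3] c[of b4] assms by (auto simp: B_def)
  ultimately show ?thesis by simp
qed

lemma basis4_inner:
  fixes b1 b2 b3 b4 x y :: L4
  assumes o12: "lor4 b1 b2 = 0" and o13: "lor4 b1 b3 = 0" and o14: "lor4 b1 b4 = 0"
    and o23: "lor4 b2 b3 = 0" and o24: "lor4 b2 b4 = 0" and o34: "lor4 b3 b4 = 0"
    and n1: "lor4 b1 b1 \<noteq> 0" and n2: "lor4 b2 b2 \<noteq> 0"
    and n3: "lor4 b3 b3 \<noteq> 0" and n4: "lor4 b4 b4 \<noteq> 0"
  shows "lor4 x y = lor4 x b1 * lor4 y b1 / lor4 b1 b1 + lor4 x b2 * lor4 y b2 / lor4 b2 b2
           + lor4 x b3 * lor4 y b3 / lor4 b3 b3 + lor4 x b4 * lor4 y b4 / lor4 b4 b4"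
proof -
  have "lor4 x y = lor4 ((lor4 x b1 / lor4 b1 b1) *\<^sub>R b1 + (lor4 x b2 / lor4 b2 b2) *\<^sub>R b2
           + (lor4 x b3 / lor4 b3 b3) *\<^sub>R b3 + (lor4 x b4 / lor4 b4 b4) *\<^sub>R b4) y"
    using basis4[OF assms, of x] by simp
  then show ?thesis by (simp add: lor4_sym[of _ y])
qed

lemma basis4_zero:
  fixes b1 b2 b3 b4 x :: L4
  assumes "lor4 b1 b2 = 0" and "lor4 b1 b3 = 0" and "lor4 b1 b4 = 0"
    and "lor4 b2 b3 = 0" and "lor4 b2 b4 = 0" and "lor4 b3 b4 = 0"
    and "lor4 b1 b1 \<noteq> 0" and "lor4 b2 b2 \<noteq> 0"
    and "lor4 b3 b3 \<noteq> 0" and "lor4 b4 b4 \<noteq> 0"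
    and "lor4 x b1 = 0" "lor4 x b2 = 0" "lor4 x b3 = 0" "lor4 x b4 = 0"
  shows "x = 0"
  using basis4[OF assms(1-10), of x] assms(11-14) by simp

lemma exists_orth3:
  fixes b1 b2 b3 :: L4
  assumes "lor4 b1 b2 = 0" "lor4 b1 b3 = 0" "lor4 b2 b3 = 0"
    "lor4 b1 b1 \<noteq> 0" "lor4 b2 b2 \<noteq> 0" "lor4 b3 b3 \<noteq> 0"
  shows "\<exists>w. w \<noteq> 0 \<and> lor4 w b1 = 0 \<and> lor4 w b2 = 0 \<and> lor4 w b3 = 0"
proof (rule ccontr)
  assume H: "\<not> ?thesis"
  have sym: "lor4 b2 b1 = 0" "lor4 b3 b1 = 0" "lor4 b3 b2 = 0"
    using assms lor4_sym by metis+
  define P where "P x = x - (lor4 x b1 / lor4 b1 b1) *\<^sub>R b1 - (lor4 x b2 / lor4 b2 b2) *\<^sub>R b2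
           - (lor4 x b3 / lor4 b3 b3) *\<^sub>R b3" for x
  have "P x = 0" for x
  proof -
    have "lor4 (P x) b1 = 0" "lor4 (P x) b2 = 0" "lor4 (P x) b3 = 0"
      using assms sym by (simp_all add: P_def)
    then show ?thesis using H by blast
  qed
  then have "x \<in> span {b1,b2,b3}" for x
  proof -
    have "x = (lor4 x b1 / lor4 b1 b1) *\<^sub>R b1 + (lor4 x b2 / lor4 b2 b2) *\<^sub>R b2
           + (lor4 x b3 / lor4 b3 b3) *\<^sub>R b3"
      using \<open>P x = 0\<close> by (simp add: P_def algebra_simps)
    also have "\<dots> \<in> span {b1,b2,b3}"
      by (intro span_add span_scale span_base) auto
    finally show ?thesis .
  qed
  then have "UNIV \<subseteq> span {b1,b2,b3}" by auto
  then have "dim (UNIV :: L4 set) \<le> card {b1,b2,b3}"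
    by (intro dim_le_card) auto
  also have "\<dots> \<le> 3" by (simp add: card_insert_if)
  finally show False by simp
qed

lemma H2_inner_le:
  assumes "x \<in> H2" "y \<in> H2" shows "lor3 x y \<le> -1"
proof -
  obtain x0 x1 x2 where x: "x = (x0,x1,x2)" by (cases x) auto
  obtain y0 y1 y2 where y: "y = (y0,y1,y2)" by (cases y) auto
  have hx: "x0^2 = 1 + x1^2 + x2^2" "x0 > 0" using assms(1) by (auto simp: H2_def lor3_def x power2_eq_square)
  have hy: "y0^2 = 1 + y1^2 + y2^2" "y0 > 0" using assms(2) by (auto simp: H2_def lor3_def y power2_eq_square)
  have x01: "x0 \<ge> 1" using hx by (smt (verit) one_le_power power2_eq_square sum_power2_ge_zero mult_le_cancel_left1 abs_le_square_iff)
  have y01: "y0 \<ge> 1" using hy by (smt (verit) one_le_power power2_eq_square sum_power2_ge_zero mult_le_cancel_left1 abs_le_square_iff)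
  define p where "p = x1*y1 + x2*y2"
  have cs: "p^2 \<le> (x1^2+x2^2)*(y1^2+y2^2)"
  proof -
    have "0 \<le> (x1*y2 - x2*y1)^2" by simp
    then show ?thesis by (simp add: p_def power2_eq_square algebra_simps)
  qed
  have m: "(x0*y0-1)^2 - (x0^2-1)*(y0^2-1) = (x0-y0)^2" by (simp add: power2_eq_square algebra_simps)
  have "p^2 \<le> (x0*y0-1)^2" using cs m hx hy by (smt (verit) zero_le_power2)
  moreover have "x0*y0 - 1 \<ge> 0" using x01 y01 by (smt (verit) mult_ge1_I)
  ultimately have "p \<le> x0*y0 - 1" using abs_le_square_iff power2_le_imp_le by (smt (verit))
  then show ?thesis by (simp add: lor3_def x y p_def)
qed

lemma timelike_fst_pos:
  assumes "lor3 x x = -1" "y \<in> H2" "lor3 x y < 0" shows "fst x > 0"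
proof (rule ccontr)
  assume "\<not> fst x > 0"
  then have "fst (-x) \<ge> 0" by simp
  moreover have "fst (-x) \<noteq> 0"
  proof
    assume "fst (-x) = 0"
    then have "lor3 x x = (fst (snd x))^2 + (snd (snd x))^2" by (simp add: lor3_def power2_eq_square)
    then show False using assms(1) by (smt (verit) zero_le_power2)
  qed
  ultimately have "-x \<in> H2" using assms(1) by (simp add: H2_def)
  then have "lor3 (-x) y \<le> -1" using H2_inner_le assms(2) by blast
  then show False using assms(3) by simp
qed

lemma orth_timelike_spacelike:
  fixes w :: L4
  assumes "N \<in> H2" "lor4 w (N,0) = 0" "w \<noteq> 0" shows "lor4 w w > 0"
proof -
  obtain N0 N1 N2 where N: "N = (N0,N1,N2)" by (cases N) auto
  obtain w0 w1 w2 w3 where w: "w = ((w0,w1,w2),w3)" by (cases w) auto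
  have hN: "N0^2 = 1 + N1^2 + N2^2" "N0 > 0" using assms(1) by (auto simp: H2_def lor3_def N power2_eq_square)
  have o: "w0*N0 = w1*N1 + w2*N2" using assms(2) by (simp add: w N lor3_def)
  have cs: "(w1*N1+w2*N2)^2 \<le> (w1^2+w2^2)*(N1^2+N2^2)"
  proof -
    have "0 \<le> (w1*N2 - w2*N1)^2" by simp
    then show ?thesis by (simp add: power2_eq_square algebra_simps)
  qed
  then have "w0^2 * N0^2 \<le> (w1^2+w2^2)*(N0^2 - 1)" using o hN
    by (metis add.assoc add_diff_cancel_left' power_mult_distrib)
  then have k: "w0^2 * N0^2 + (w1^2+w2^2) \<le> (w1^2+w2^2)*N0^2" by (simp add: algebra_simps)
  have "w0^2 \<le> w1^2 + w2^2"
  proof -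
    have "N0^2 > 0" using hN(2) by simp
    moreover have "w0^2 * N0^2 \<le> (w1^2+w2^2)*N0^2" using k by (smt (verit) zero_le_power2)
    ultimately show ?thesis by simp
  qed
  show ?thesis
  proof (cases "w1^2+w2^2 = 0")
    case True
    then have "w1 = 0" "w2 = 0" by (simp_all add: sum_power2_eq_zero_iff)
    then have "w0 = 0" using o hN by simp
    then have "w3 \<noteq> 0" using assms(3) \<open>w1 = 0\<close> \<open>w2 = 0\<close> by (auto simp: w zero_prod_def)
    then show ?thesis using \<open>w0 = 0\<close> \<open>w1 = 0\<close> \<open>w2 = 0\<close> by (simp add: w lor3_def) (metis linorder_neq_iff mult_neg_neg mult_pos_pos)
  next
    case False
    then have "w1^2+w2^2 > 0" by (smt (verit) zero_le_power2)
    then have "w0^2 * N0^2 + (w1^2+w2^2) > w0^2*N0^2" by simp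
    with k have "w0^2*N0^2 < (w1^2+w2^2)*N0^2" by simp
    then have "w0^2 < w1^2+w2^2" using hN by (simp add: mult_less_cancel_right)
    then show ?thesis by (simp add: w lor3_def power2_eq_square) (smt (verit) zero_le_square)
  qed
qed

lemma pd_local:
  assumes "open \<Omega>" "z \<in> \<Omega>" "\<And>w. w \<in> \<Omega> \<Longrightarrow> f w = g w"
  shows "pd d f z = pd d g z"
proof -
  have "(f has_derivative D) (at z) \<longleftrightarrow> (g has_derivative D) (at z)" for D
    using has_derivative_transform_within_open[of f D z UNIV \<Omega> g]
          has_derivative_transform_within_open[of g D z UNIV \<Omega> f] assms by auto
  then have "frechet_derivative f (at z) = frechet_derivative g (at z)"
    unfolding frechet_derivative_def by simp
  then show ?thesis by (simp add: pd_def)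
qed

lemma pd_works: "f differentiable (at z) \<Longrightarrow> (f has_derivative (\<lambda>d. pd d f z)) (at z)"
  unfolding pd_def using frechet_derivative_works by (metis eta_contract_eq)

lemma pd_unique: "(f has_derivative F) (at z) \<Longrightarrow> pd d f z = F d"
  unfolding pd_def using frechet_derivative_at by metis

lemma pd_bilin:
  assumes "bounded_bilinear bil" "f differentiable (at z)" "g differentiable (at z)"
  shows "pd d (\<lambda>w. bil (f w) (g w)) z = bil (pd d f z) (g z) + bil (f z) (pd d g z)"
proof -
  have "((\<lambda>w. bil (f w) (g w)) has_derivative (\<lambda>h. bil (f z) (pd h g z) + bil (pd h f z) (g z))) (at z)"
    using bounded_bilinear.FDERIV[OF assms(1) pd_works[OF assms(2)] pd_works[OF assms(3)]] .
  then show ?thesis by (simp add: pd_unique add.commute)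
qed

lemma pd_lin:
  assumes "bounded_linear L" "f differentiable (at z)"
  shows "pd d (\<lambda>w. L (f w)) z = L (pd d f z)"
  using bounded_linear.has_derivative[OF assms(1) pd_works[OF assms(2)]] pd_unique by metis

lemma pd_add:
  assumes "f differentiable (at z)" "g differentiable (at z)"
  shows "pd d (\<lambda>w. f w + g w) z = pd d f z + pd d g z"
  using has_derivative_add[OF pd_works[OF assms(1)] pd_works[OF assms(2)]] pd_unique by metis

lemma pd_diff:
  assumes "f differentiable (at z)" "g differentiable (at z)"
  shows "pd d (\<lambda>w. f w - g w) z = pd d f z - pd d g z"
  using has_derivative_diff[OF pd_works[OF assms(1)] pd_works[OF assms(2)]] pd_unique by metis

lemma pd_const[simp]: "pd d (\<lambda>w. c) z = 0"
  by (simp add: pd_def)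

lemma pd_scale_dir:
  assumes "f differentiable (at z)"
  shows "pd (c *\<^sub>R d) f z = c *\<^sub>R pd d f z"
proof -
  have "linear (\<lambda>d. pd d f z)"
    using pd_works[OF assms] has_derivative_linear by blast
  from linear_cmul[OF this, of c d] show ?thesis by simp
qed

lemma diff_on_at: "f differentiable_on \<Omega> \<Longrightarrow> open \<Omega> \<Longrightarrow> z \<in> \<Omega> \<Longrightarrow> f differentiable (at z)"
  using differentiable_on_eq_differentiable_at by blast

lemma differentiable_on_local:
  assumes "open \<Omega>" "\<And>w. w \<in> \<Omega> \<Longrightarrow> f w = g w" "f differentiable_on \<Omega>"
  shows "g differentiable_on \<Omega>"
proof -
  have "g differentiable (at z)" if "z \<in> \<Omega>" for z
  proof -
    from diff_on_at[OF assms(3) assms(1) that] obtain D where "(f has_derivative D) (at z)"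
      unfolding differentiable_def by blast
    then have "(g has_derivative D) (at z)"
      using has_derivative_transform_within_open[of f D z UNIV \<Omega> g] assms that by auto
    then show ?thesis unfolding differentiable_def by blast
  qed
  then show ?thesis using differentiable_on_eq_differentiable_at assms(1) by blast
qed

lemma iter_pd_local:
  assumes "open \<Omega>" "\<And>w. w \<in> \<Omega> \<Longrightarrow> f w = g w"
  shows "w \<in> \<Omega> \<Longrightarrow> iter_pd ds f w = iter_pd ds g w"
proof (induction ds arbitrary: w)
  case Nil then show ?case using assms by simp
next
  case (Cons d ds)
  then show ?case using pd_local[OF assms(1) Cons.prems, of "iter_pd ds f" "iter_pd ds g" d] Cons.IH by simp
qed

lemma iter_pd_snoc: "iter_pd (ds @ [d]) f = iter_pd ds (pd d f)"
  by (induction ds) auto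

lemma smooth_diffon: "smooth_on \<Omega> f \<Longrightarrow> iter_pd ds f differentiable_on \<Omega>"
  by (simp add: smooth_on_def)

lemma smooth_pd: "smooth_on \<Omega> f \<Longrightarrow> smooth_on \<Omega> (pd d f)"
  unfolding smooth_on_def by (metis iter_pd_snoc)

lemma smooth_at: "smooth_on \<Omega> f \<Longrightarrow> open \<Omega> \<Longrightarrow> z \<in> \<Omega> \<Longrightarrow> f differentiable (at z)"
  using smooth_diffon[of \<Omega> f "[]"] diff_on_at by auto

lemma smooth_local:
  assumes "open \<Omega>" "\<And>w. w \<in> \<Omega> \<Longrightarrow> f w = g w" "smooth_on \<Omega> f"
  shows "smooth_on \<Omega> g"
  unfolding smooth_on_def
proof
  fix ds
  show "iter_pd ds g differentiable_on \<Omega>"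
    using differentiable_on_local[OF assms(1) iter_pd_local[OF assms(1,2)] smooth_diffon[OF assms(3)]]
    by blast
qed

lemma iter_pd_const: "\<exists>c'. iter_pd ds (\<lambda>w. c) = (\<lambda>w. c')"
proof (induction ds)
  case Nil then show ?case by auto
next
  case (Cons d ds)
  then obtain c' where "iter_pd ds (\<lambda>w. c) = (\<lambda>w. c')" by blast
  then show ?case by (auto simp: pd_def[abs_def])
qed

lemma smooth_const: "smooth_on \<Omega> (\<lambda>w. c)"
  unfolding smooth_on_def
proof
  fix ds show "iter_pd ds (\<lambda>w. c) differentiable_on \<Omega>"
    using iter_pd_const[of ds c] by (metis differentiable_const differentiable_on_def)
qed

lemma diffon_lin:
  assumes "bounded_linear L" "f differentiable_on S"
  shows "(\<lambda>w. L (f w)) differentiable_on S"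
  unfolding differentiable_on_def differentiable_def
proof
  fix x assume "x \<in> S"
  then obtain D where "(f has_derivative D) (at x within S)"
    using assms(2) unfolding differentiable_on_def differentiable_def by blast
  then show "\<exists>D. ((\<lambda>w. L (f w)) has_derivative D) (at x within S)"
    using bounded_linear.has_derivative[OF assms(1)] by blast
qed

lemma diffon_bilin:
  assumes "bounded_bilinear b" "f differentiable_on S" "g differentiable_on S"
  shows "(\<lambda>w. b (f w) (g w)) differentiable_on S"
  unfolding differentiable_on_def differentiable_def
proof
  fix x assume "x \<in> S"
  then obtain D E where "(f has_derivative D) (at x within S)" "(g has_derivative E) (at x within S)"
    using assms(2,3) unfolding differentiable_on_def differentiable_def by blast
  then show "\<exists>D. ((\<lambda>w. b (f w) (g w)) has_derivative D) (at x within S)"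
    using bounded_bilinear.FDERIV[OF assms(1)] by blast
qed

lemma iter_pd_lin:
  assumes "open \<Omega>" "bounded_linear L" "smooth_on \<Omega> f"
  shows "w \<in> \<Omega> \<Longrightarrow> iter_pd ds (\<lambda>w. L (f w)) w = L (iter_pd ds f w)"
proof (induction ds arbitrary: w)
  case Nil then show ?case by simp
next
  case (Cons d ds)
  have "pd d (iter_pd ds (\<lambda>w. L (f w))) w = pd d (\<lambda>w. L (iter_pd ds f w)) w"
    by (rule pd_local[OF assms(1) Cons.prems]) (rule Cons.IH)
  also have "\<dots> = L (pd d (iter_pd ds f) w)"
    by (rule pd_lin[OF assms(2)]) (rule diff_on_at[OF smooth_diffon[OF assms(3)] assms(1) Cons.prems])
  finally show ?case by simp
qed

lemma smooth_lin:
  assumes "open \<Omega>" "bounded_linear L" "smooth_on \<Omega> f"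
  shows "smooth_on \<Omega> (\<lambda>w. L (f w))"
  unfolding smooth_on_def
proof
  fix ds
  have "(\<lambda>w. L (iter_pd ds f w)) differentiable_on \<Omega>"
    by (rule diffon_lin[OF assms(2) smooth_diffon[OF assms(3)]])
  then show "iter_pd ds (\<lambda>w. L (f w)) differentiable_on \<Omega>"
    by (rule differentiable_on_local[OF assms(1), rotated]) (simp add: iter_pd_lin[OF assms])
qed

lemma iter_pd_add:
  assumes "open \<Omega>"
    and "\<And>ds'. length ds' < length ds \<Longrightarrow> iter_pd ds' A differentiable_on \<Omega> \<and> iter_pd ds' B differentiable_on \<Omega>"
  shows "w \<in> \<Omega> \<Longrightarrow> iter_pd ds (\<lambda>w. A w + B w) w = iter_pd ds A w + iter_pd ds B w"
  using assms(2)
proof (induction ds arbitrary: w)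
  case Nil then show ?case by simp
next
  case (Cons d ds)
  have pre: "\<And>ds'. length ds' < length ds \<Longrightarrow> iter_pd ds' A differentiable_on \<Omega> \<and> iter_pd ds' B differentiable_on \<Omega>"
    using Cons.prems(2) by simp
  have IH: "\<And>w. w \<in> \<Omega> \<Longrightarrow> iter_pd ds (\<lambda>w. A w + B w) w = iter_pd ds A w + iter_pd ds B w"
    using Cons.IH[OF _ pre] by simp
  have dA: "iter_pd ds A differentiable_on \<Omega>" and dB: "iter_pd ds B differentiable_on \<Omega>"
    using Cons.prems(2)[of ds] by simp_all
  have "pd d (iter_pd ds (\<lambda>w. A w + B w)) w = pd d (\<lambda>w. iter_pd ds A w + iter_pd ds B w) w"
    by (rule pd_local[OF assms(1) Cons.prems(1)]) (rule IH)
  also have "\<dots> = pd d (iter_pd ds A) w + pd d (iter_pd ds B) w"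
    by (rule pd_add) (rule diff_on_at[OF _ assms(1) Cons.prems(1)], fact)+
  finally show ?case by simp
qed

lemma smooth_add:
  assumes "open \<Omega>" "smooth_on \<Omega> f" "smooth_on \<Omega> g"
  shows "smooth_on \<Omega> (\<lambda>w. f w + g w)"
  unfolding smooth_on_def
proof
  fix ds
  have "(\<lambda>w. iter_pd ds f w + iter_pd ds g w) differentiable_on \<Omega>"
    using smooth_diffon[OF assms(2), of ds] smooth_diffon[OF assms(3), of ds] by (simp add: differentiable_on_add)
  moreover have "w \<in> \<Omega> \<Longrightarrow> iter_pd ds (\<lambda>w. f w + g w) w = iter_pd ds f w + iter_pd ds g w" for w
    by (rule iter_pd_add[OF assms(1)]) (simp_all add: smooth_diffon[OF assms(2)] smooth_diffon[OF assms(3)])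
  ultimately show "iter_pd ds (\<lambda>w. f w + g w) differentiable_on \<Omega>"
    using differentiable_on_local[OF assms(1), of "\<lambda>w. iter_pd ds f w + iter_pd ds g w" "iter_pd ds (\<lambda>w. f w + g w)"]
    by simp
qed

lemma smooth_bilin:
  fixes f :: "complex \<Rightarrow> 'a::real_normed_vector" and g :: "complex \<Rightarrow> 'b::real_normed_vector"
    and bil :: "'a \<Rightarrow> 'b \<Rightarrow> 'c::real_normed_vector"
  assumes "open \<Omega>" "bounded_bilinear bil"
  shows "smooth_on \<Omega> f \<Longrightarrow> smooth_on \<Omega> g \<Longrightarrow> smooth_on \<Omega> (\<lambda>w. bil (f w) (g w))"
proof -
  have main: "\<And>(f::complex \<Rightarrow> 'a) (g::complex \<Rightarrow> 'b) ds. smooth_on \<Omega> f \<Longrightarrow> smooth_on \<Omega> g \<Longrightarrow> length ds \<le> n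
        \<Longrightarrow> iter_pd ds (\<lambda>w. bil (f w) (g w)) differentiable_on \<Omega>" for n
  proof (induction n)
    case 0
    fix f :: "complex \<Rightarrow> 'a" and g :: "complex \<Rightarrow> 'b" and ds :: "complex list"
    assume H: "smooth_on \<Omega> f" "smooth_on \<Omega> g" "length ds \<le> (0::nat)"
    then have "ds = []" by simp
    have "(\<lambda>w. bil (f w) (g w)) differentiable_on \<Omega>"
      by (rule diffon_bilin[OF assms(2)]) (use smooth_diffon[OF H(1), of "[]"] smooth_diffon[OF H(2), of "[]"] in simp_all)
    then show "iter_pd ds (\<lambda>w. bil (f w) (g w)) differentiable_on \<Omega>" using \<open>ds = []\<close> by simp
  next
    case (Suc n)
    fix f :: "complex \<Rightarrow> 'a" and g :: "complex \<Rightarrow> 'b" and ds :: "complex list"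
    assume H: "smooth_on \<Omega> f" "smooth_on \<Omega> g" "length ds \<le> Suc n"
    show "iter_pd ds (\<lambda>w. bil (f w) (g w)) differentiable_on \<Omega>"
    proof (cases ds rule: rev_exhaust)
      case Nil
      then show ?thesis using Suc.IH[OF H(1,2), of "[]"] by simp
    next
      case (snoc ds' d)
      have len: "length ds' \<le> n" using H snoc by simp
      define A where "A = (\<lambda>w. bil (pd d f w) (g w))"
      define B where "B = (\<lambda>w. bil (f w) (pd d g w))"
      have sA: "iter_pd e A differentiable_on \<Omega>" if "length e \<le> n" for e
        unfolding A_def by (rule Suc.IH[OF smooth_pd[OF H(1)] H(2) that])
      have sB: "iter_pd e B differentiable_on \<Omega>" if "length e \<le> n" for e
        unfolding B_def by (rule Suc.IH[OF H(1) smooth_pd[OF H(2)] that])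
      have eq1: "pd d (\<lambda>w. bil (f w) (g w)) w = A w + B w" if "w \<in> \<Omega>" for w
      proof -
        have "pd d (\<lambda>w. bil (f w) (g w)) w = bil (pd d f w) (g w) + bil (f w) (pd d g w)"
          by (rule pd_bilin[OF assms(2)]) (rule smooth_at[OF _ assms(1) that], fact)+
        then show ?thesis by (simp add: A_def B_def)
      qed
      have eq2: "iter_pd ds' (pd d (\<lambda>w. bil (f w) (g w))) w = iter_pd ds' A w + iter_pd ds' B w"
        if "w \<in> \<Omega>" for w
      proof -
        have "iter_pd ds' (pd d (\<lambda>w. bil (f w) (g w))) w = iter_pd ds' (\<lambda>w. A w + B w) w"
          by (rule iter_pd_local[OF assms(1) eq1 that])
        also have "\<dots> = iter_pd ds' A w + iter_pd ds' B w"
          by (rule iter_pd_add[OF assms(1) _ that]) (use sA sB len in simp)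
        finally show ?thesis .
      qed
      have "(\<lambda>w. iter_pd ds' A w + iter_pd ds' B w) differentiable_on \<Omega>"
        using sA[OF len] sB[OF len] by (simp add: differentiable_on_add)
      then have "iter_pd ds' (pd d (\<lambda>w. bil (f w) (g w))) differentiable_on \<Omega>"
        using differentiable_on_local[OF assms(1), of "\<lambda>w. iter_pd ds' A w + iter_pd ds' B w"] eq2 by simp
      then show ?thesis by (simp add: snoc iter_pd_snoc)
    qed
  qed
  show "smooth_on \<Omega> f \<Longrightarrow> smooth_on \<Omega> g \<Longrightarrow> smooth_on \<Omega> (\<lambda>w. bil (f w) (g w))"
    unfolding smooth_on_def[of \<Omega> "\<lambda>w. bil (f w) (g w)"] using main by blast
qed

lemma mvt_step:
  fixes F F' :: "real \<Rightarrow> real"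
  assumes "0 < h" "\<And>x. 0 \<le> x \<Longrightarrow> x \<le> h \<Longrightarrow> (F has_real_derivative F' x) (at x)"
  shows "\<exists>s. 0 < s \<and> s < h \<and> F h - F 0 = h * F' s"
proof -
  have "continuous_on {0..h} F"
    using assms(2) DERIV_isCont continuous_at_imp_continuous_on by (metis atLeastAtMost_iff)
  moreover have "F differentiable (at x)" if "0 < x" "x < h" for x
    using assms(2)[of x] that real_differentiable_def by (metis less_eq_real_def)
  ultimately obtain l s where "0 < s" "s < h" "DERIV F s :> l" "F h - F 0 = (h - 0) * l"
    using MVT[OF assms(1)] by blast
  moreover have "l = F' s" using DERIV_unique assms(2)[of s] \<open>DERIV F s :> l\<close> \<open>0 < s\<close> \<open>s < h\<close> by force
  ultimately show ?thesis by auto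
qed

lemma line_deriv_gen:
  fixes \<phi> :: "complex \<Rightarrow> real"
  assumes "\<phi> differentiable (at (p + of_real x * d))"
  shows "((\<lambda>t. \<phi> (p + of_real t * d)) has_real_derivative pd d \<phi> (p + of_real x * d)) (at x)"
proof -
  have l: "((\<lambda>t. p + of_real t * d) has_derivative (\<lambda>t. of_real t * d)) (at x)"
    by (auto intro!: derivative_eq_intros)
  have "((\<lambda>t. \<phi> (p + of_real t * d)) has_derivative (\<lambda>t. pd (of_real t * d) \<phi> (p + of_real x * d))) (at x)"
    using has_derivative_compose[OF l pd_works[OF assms]] by simp
  moreover have "(\<lambda>t. pd (of_real t * d) \<phi> (p + of_real x * d)) = (\<lambda>t. pd d \<phi> (p + of_real x * d) * t)"
  proof
    fix t
    have "of_real t * d = t *\<^sub>R d" by (simp add: scaleR_conv_of_real)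
    then show "pd (of_real t * d) \<phi> (p + of_real x * d) = pd d \<phi> (p + of_real x * d) * t"
      using pd_scale_dir[OF assms, of t d] by simp
  qed
  ultimately show ?thesis unfolding has_field_derivative_def by simp
qed

lemma lineU:
  fixes \<phi> :: "complex \<Rightarrow> real"
  assumes "\<phi> differentiable (at (z + of_real x + c))"
  shows "((\<lambda>t. \<phi> (z + of_real t + c)) has_real_derivative pd 1 \<phi> (z + of_real x + c)) (at x)"
proof -
  have e: "z + of_real t + c = (z + c) + of_real t * 1" for t by (simp add: algebra_simps)
  show ?thesis using line_deriv_gen[of \<phi> "z + c" x 1] assms unfolding e by simp
qed

lemma lineV:
  fixes \<phi> :: "complex \<Rightarrow> real"
  assumes "\<phi> differentiable (at (z + c + of_real y * \<i>))"
  shows "((\<lambda>t. \<phi> (z + c + of_real t * \<i>)) has_real_derivative pd \<i> \<phi> (z + c + of_real y * \<i>)) (at y)"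
  using line_deriv_gen[of \<phi> "z + c" y \<i>] assms by simp

lemma schwarz:
  fixes \<phi> :: "complex \<Rightarrow> real"
  assumes \<Omega>: "open \<Omega>" and z: "z \<in> \<Omega>" and sm: "smooth_on \<Omega> \<phi>"
  shows "pd \<i> (pd 1 \<phi>) z = pd 1 (pd \<i> \<phi>) z"
proof -
  obtain r where r: "r > 0" "ball z r \<subseteq> \<Omega>" using \<Omega> z open_contains_ball by blast
  define Q where "Q a b = z + complex_of_real a + complex_of_real b * \<i>" for a b
  have Qd: "dist (Q a b) z \<le> 2*h" if "0 \<le> a" "a \<le> h" "0 \<le> b" "b \<le> h" for a b h
  proof -
    have "dist (Q a b) z = norm (complex_of_real a + complex_of_real b * \<i>)"
      by (simp add: Q_def dist_norm)
    also have "\<dots> \<le> norm (complex_of_real a) + norm (complex_of_real b * \<i>)" by (rule norm_triangle_ineq)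
    also have "\<dots> = a + b" using that by (simp add: norm_mult)
    finally show ?thesis using that by simp
  qed
  have QO: "Q a b \<in> \<Omega>" if "0 \<le> a" "a \<le> h" "0 \<le> b" "b \<le> h" "2*h < r" for a b h
    using Qd[OF that(1-4)] that(5) r(2) by (auto simp: dist_commute)
  have s1: "smooth_on \<Omega> (pd 1 \<phi>)" and s2: "smooth_on \<Omega> (pd \<i> \<phi>)"
    using smooth_pd sm by blast+
  have d0: "\<phi> differentiable (at w)" if "w \<in> \<Omega>" for w using smooth_at[OF sm \<Omega> that] .
  have d1: "pd 1 \<phi> differentiable (at w)" if "w \<in> \<Omega>" for w using smooth_at[OF s1 \<Omega> that] .
  have d2: "pd \<i> \<phi> differentiable (at w)" if "w \<in> \<Omega>" for w using smooth_at[OF s2 \<Omega> that] .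
  have c12: "isCont (pd \<i> (pd 1 \<phi>)) z"
  proof -
    have "(pd \<i> (pd 1 \<phi>)) differentiable_on \<Omega>" using smooth_diffon[OF smooth_pd[OF s1, of \<i>], of "[]"] by simp
    then have "continuous_on \<Omega> (pd \<i> (pd 1 \<phi>))" by (rule differentiable_imp_continuous_on)
    then show ?thesis using continuous_on_eq_continuous_at[OF \<Omega>] z by blast
  qed
  have c21: "isCont (pd 1 (pd \<i> \<phi>)) z"
  proof -
    have "(pd 1 (pd \<i> \<phi>)) differentiable_on \<Omega>" using smooth_diffon[OF smooth_pd[OF s2, of 1], of "[]"] by simp
    then have "continuous_on \<Omega> (pd 1 (pd \<i> \<phi>))" by (rule differentiable_imp_continuous_on)
    then show ?thesis using continuous_on_eq_continuous_at[OF \<Omega>] z by blast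
  qed
  have key: "\<exists>w1 w2. dist w1 z \<le> 2*h \<and> dist w2 z \<le> 2*h \<and> pd \<i> (pd 1 \<phi>) w1 = pd 1 (pd \<i> \<phi>) w2"
    if h: "0 < h" "2*h < r" for h
  proof -
    have inQ: "\<And>a b. 0 \<le> a \<Longrightarrow> a \<le> h \<Longrightarrow> 0 \<le> b \<Longrightarrow> b \<le> h \<Longrightarrow> z + complex_of_real a + complex_of_real b * \<i> \<in> \<Omega>"
      using QO h unfolding Q_def by blast
    define D where "D = \<phi> (Q h h) - \<phi> (Q h 0) - \<phi> (Q 0 h) + \<phi> (Q 0 0)"
    define F where "F x = \<phi> (z + of_real x + of_real h * \<i>) - \<phi> (z + of_real x + of_real 0 * \<i>)" for x
    have dF: "(F has_real_derivative (pd 1 \<phi> (z + of_real x + of_real h * \<i>) - pd 1 \<phi> (z + of_real x + of_real 0 * \<i>))) (at x)"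
      if "0 \<le> x" "x \<le> h" for x
      unfolding F_def
      by (intro DERIV_diff lineU d0 inQ) (use that h in auto)
    obtain s where s: "0 < s" "s < h"
      "F h - F 0 = h * (pd 1 \<phi> (z + of_real s + of_real h * \<i>) - pd 1 \<phi> (z + of_real s + of_real 0 * \<i>))"
      using mvt_step[OF h(1) dF] by blast
    have dK: "((\<lambda>y. pd 1 \<phi> (z + of_real s + of_real y * \<i>)) has_real_derivative pd \<i> (pd 1 \<phi>) (z + of_real s + of_real y * \<i>)) (at y)"
      if "0 \<le> y" "y \<le> h" for y
      by (intro lineV d1 inQ) (use that h s in auto)
    obtain t where t: "0 < t" "t < h"
      "pd 1 \<phi> (z + of_real s + of_real h * \<i>) - pd 1 \<phi> (z + of_real s + of_real 0 * \<i>)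
         = h * pd \<i> (pd 1 \<phi>) (z + of_real s + of_real t * \<i>)"
      using mvt_step[OF h(1) dK] by auto
    have "D = F h - F 0" by (simp add: D_def F_def Q_def)
    also have "\<dots> = h * (h * pd \<i> (pd 1 \<phi>) (z + of_real s + of_real t * \<i>))"
      using s(3) t(3) by simp
    finally have D1: "D = h * h * pd \<i> (pd 1 \<phi>) (Q s t)" by (simp add: Q_def)
    define G where "G y = \<phi> (z + of_real h + of_real y * \<i>) - \<phi> (z + of_real 0 + of_real y * \<i>)" for y
    have dG: "(G has_real_derivative (pd \<i> \<phi> (z + of_real h + of_real y * \<i>) - pd \<i> \<phi> (z + of_real 0 + of_real y * \<i>))) (at y)"
      if "0 \<le> y" "y \<le> h" for y
      unfolding G_def
      by (intro DERIV_diff lineV d0 inQ) (use that h in auto)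
    obtain t' where t': "0 < t'" "t' < h"
      "G h - G 0 = h * (pd \<i> \<phi> (z + of_real h + of_real t' * \<i>) - pd \<i> \<phi> (z + of_real 0 + of_real t' * \<i>))"
      using mvt_step[OF h(1) dG] by blast
    have dL: "((\<lambda>x. pd \<i> \<phi> (z + of_real x + of_real t' * \<i>)) has_real_derivative pd 1 (pd \<i> \<phi>) (z + of_real x + of_real t' * \<i>)) (at x)"
      if "0 \<le> x" "x \<le> h" for x
      by (intro lineU d2 inQ) (use that h t' in auto)
    obtain s' where s': "0 < s'" "s' < h"
      "pd \<i> \<phi> (z + of_real h + of_real t' * \<i>) - pd \<i> \<phi> (z + of_real 0 + of_real t' * \<i>)
         = h * pd 1 (pd \<i> \<phi>) (z + of_real s' + of_real t' * \<i>)"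
      using mvt_step[OF h(1) dL] by auto
    have "D = G h - G 0" by (simp add: D_def G_def Q_def)
    also have "\<dots> = h * (h * pd 1 (pd \<i> \<phi>) (z + of_real s' + of_real t' * \<i>))"
      using t'(3) s'(3) by simp
    finally have D2: "D = h * h * pd 1 (pd \<i> \<phi>) (Q s' t')" by (simp add: Q_def)
    have "pd \<i> (pd 1 \<phi>) (Q s t) = pd 1 (pd \<i> \<phi>) (Q s' t')"
      using D1 D2 h(1) by simp
    moreover have "dist (Q s t) z \<le> 2*h" "dist (Q s' t') z \<le> 2*h"
      using Qd s t s' t' by auto
    ultimately show ?thesis by blast
  qed
  show ?thesis
  proof (rule ccontr)
    assume ne: "pd \<i> (pd 1 \<phi>) z \<noteq> pd 1 (pd \<i> \<phi>) z"
    define e where "e = \<bar>pd \<i> (pd 1 \<phi>) z - pd 1 (pd \<i> \<phi>) z\<bar> / 3"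
    have e: "e > 0" using ne by (simp add: e_def)
    obtain d1 where d1: "d1 > 0" "\<And>w. dist w z < d1 \<Longrightarrow> dist (pd \<i> (pd 1 \<phi>) w) (pd \<i> (pd 1 \<phi>) z) < e"
      using c12 e unfolding continuous_at_eps_delta by blast
    obtain d2 where d2: "d2 > 0" "\<And>w. dist w z < d2 \<Longrightarrow> dist (pd 1 (pd \<i> \<phi>) w) (pd 1 (pd \<i> \<phi>) z) < e"
      using c21 e unfolding continuous_at_eps_delta by blast
    define h where "h = min (min d1 d2) r / 4"
    have h: "0 < h" "2*h < r" "2*h < d1" "2*h < d2" using d1 d2 r by (auto simp: h_def)
    obtain w1 w2 where w: "dist w1 z \<le> 2*h" "dist w2 z \<le> 2*h" "pd \<i> (pd 1 \<phi>) w1 = pd 1 (pd \<i> \<phi>) w2"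
      using key[OF h(1,2)] by blast
    have "dist (pd \<i> (pd 1 \<phi>) w1) (pd \<i> (pd 1 \<phi>) z) < e" using d1(2) w(1) h(3) by simp
    moreover have "dist (pd 1 (pd \<i> \<phi>) w2) (pd 1 (pd \<i> \<phi>) z) < e" using d2(2) w(2) h(4) by simp
    ultimately show False using w(3) by (simp add: dist_real_def e_def) (smt (verit))
  qed
qed

definition E4 :: L4 where "E4 = ((0,0,0),1)"
definition Pj :: "L4 \<Rightarrow> L4" where "Pj x = (fst x, 0)"

lemma Pj_eq: "Pj x = x - snd x *\<^sub>R E4"
  by (cases x) (simp add: Pj_def E4_def zero_prod_def)
lemma lor4_E4: "lor4 x E4 = snd x" "lor4 E4 x = snd x"
  by (simp_all add: lor4_def E4_def lor3_def)
lemma sE4[simp]: "snd E4 = 1" "fst E4 = 0" by (simp_all add: E4_def zero_prod_def)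
lemma lor4_E4E4: "lor4 E4 E4 = 1" by (simp add: E4_def lor3_def)

lemma core_a:
  fixes fu fv n0 Gt Gtu Gtv :: L4 and u lam :: real
  defines "\<eta> \<equiv> u *\<^sub>R Gt - n0"
  assumes fuu: "lor4 fu fu = lam" and fvv: "lor4 fv fv = lam" and fuv: "lor4 fu fv = 0" and lam: "lam > 0"
    and n0n0: "lor4 n0 n0 = -1" and n0fu: "lor4 n0 fu = 0" and n0fv: "lor4 n0 fv = 0" and sn0: "snd n0 = 0"
    and efu: "lor4 \<eta> fu = 0" and efv: "lor4 \<eta> fv = 0" and en0: "lor4 \<eta> n0 = 0" and ee: "lor4 \<eta> \<eta> = 1"
    and u: "u > 0"
    and GtGt: "lor4 Gt Gt = 0" and GtGtu: "lor4 Gt Gtu = 0" and GtGtv: "lor4 Gt Gtv = 0"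
    and sGt: "snd Gt = 1" and sGtu: "snd Gtu = 0" and sGtv: "snd Gtv = 0"
    and conf1: "lor4 Gtu Gtu = lor4 Gtv Gtv" and conf2: "lor4 Gtu Gtv = 0"
    and symm: "lor4 Gtv fu = lor4 Gtu fv"
    and H: "- u * (lor4 Gtu fu + lor4 Gtv fv) + lor4 (Pj fu) fu + lor4 (Pj fv) fv = lam"
  shows "fu + (2 * (lor4 (Pj fu) Gt + lor4 n0 Gtu)) *\<^sub>R Gt + (2 * lor4 n0 Gt) *\<^sub>R Gtu = 0"
proof -
  have sym: "lor4 x y = lor4 y x" for x y by (rule lor4_sym)
  have b12: "lor4 fu fv = 0" and b13: "lor4 fu \<eta> = 0" and b14: "lor4 fu n0 = 0"
    and b23: "lor4 fv \<eta> = 0" and b24: "lor4 fv n0 = 0" and b34: "lor4 \<eta> n0 = 0"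
    using fuv efu efv en0 n0fu n0fv sym by metis+
  have nz: "lor4 fu fu \<noteq> 0" "lor4 fv fv \<noteq> 0" "lor4 \<eta> \<eta> \<noteq> 0" "lor4 n0 n0 \<noteq> 0"
    using fuu fvv lam ee n0n0 by auto
  note B = b12 b13 b14 b23 b24 b34 nz
  define s where "s = lor4 n0 Gt"
  have us: "u * s = -1" using en0 n0n0 by (simp add: \<eta>_def s_def sym[of Gt n0])
  define hu where "hu = snd fu"
  define hv where "hv = snd fv"
  have seta: "snd \<eta> = u" using sGt sn0 by (simp add: \<eta>_def)
  have E: "1 = hu*hu/lam + hv*hv/lam + u*u"
    using basis4_inner[OF B, of E4 E4] by (simp add: lor4_E4 lor4_E4E4 seta sn0 hu_def hv_def fuu fvv ee n0n0)
  have hh: "hu*hu + hv*hv = lam * (1 - u*u)"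
    using E lam by (simp add: field_simps)
  have Pfu: "lor4 (Pj fu) fu = lam - hu*hu" by (simp add: Pj_eq lor4_E4 fuu hu_def)
  have Pfv: "lor4 (Pj fv) fv = lam - hv*hv" by (simp add: Pj_eq lor4_E4 fvv hv_def)
  define \<alpha> where "\<alpha> = lor4 Gtu fu"
  define \<beta> where "\<beta> = lor4 Gtu fv"
  define \<delta> where "\<delta> = lor4 Gtv fv"
  define \<rho>u where "\<rho>u = lor4 Gtu n0"
  define \<rho>v where "\<rho>v = lor4 Gtv n0"
  have Gtu_eta: "lor4 Gtu \<eta> = - \<rho>u" by (simp add: \<eta>_def \<rho>u_def sym[of Gtu Gt] GtGtu)
  have Gtv_eta: "lor4 Gtv \<eta> = - \<rho>v" by (simp add: \<eta>_def \<rho>v_def sym[of Gtv Gt] GtGtv)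
  have ad: "\<alpha> + \<delta> = lam * u"
  proof -
    have "u * (\<alpha> + \<delta>) = lam - hu*hu - hv*hv" using H Pfu Pfv by (simp add: \<alpha>_def \<delta>_def algebra_simps)
    also have "\<dots> = lam * u * u" using hh by (simp add: algebra_simps)
    finally show ?thesis using u by (simp add: mult.assoc)
  qed
  have nuu: "lor4 Gtu Gtu = (\<alpha>*\<alpha> + \<beta>*\<beta>)/lam"
    using basis4_inner[OF B, of Gtu Gtu] by (simp add: Gtu_eta fuu fvv ee n0n0 \<alpha>_def \<beta>_def \<rho>u_def add_divide_distrib)
  have nvv: "lor4 Gtv Gtv = (\<beta>*\<beta> + \<delta>*\<delta>)/lam"
    using basis4_inner[OF B, of Gtv Gtv] by (simp add: Gtv_eta fuu fvv ee n0n0 \<delta>_def \<beta>_def symm[symmetric] \<rho>v_def add_divide_distrib)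
  have nuv: "lor4 Gtu Gtv = (\<alpha>*\<beta> + \<beta>*\<delta>)/lam"
    using basis4_inner[OF B, of Gtu Gtv] by (simp add: Gtu_eta Gtv_eta fuu fvv ee n0n0 \<alpha>_def \<delta>_def \<beta>_def symm[symmetric] \<rho>u_def \<rho>v_def add_divide_distrib)
  have "\<beta> * (\<alpha> + \<delta>) = 0" using conf2 nuv lam by (simp add: algebra_simps)
  then have b0: "\<beta> = 0" using ad lam u by simp
  have "\<alpha>*\<alpha> = \<delta>*\<delta>" using conf1 nuu nvv b0 lam by simp
  then have "(\<alpha> - \<delta>) * (\<alpha> + \<delta>) = 0" by (simp add: algebra_simps)
  then have "\<alpha> = \<delta>" using ad lam u by simp
  then have a: "\<alpha> = lam * u / 2" using ad by simp
  have "0 = \<alpha>*hu/lam + \<beta>*hv/lam + (- \<rho>u) * u"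
    using basis4_inner[OF B, of Gtu E4] by (simp add: lor4_E4 sGtu Gtu_eta fuu fvv ee n0n0 \<alpha>_def \<beta>_def seta sn0 hu_def hv_def)
  then have "0 = u * (hu / 2 - \<rho>u)" using a b0 lam by (simp add: algebra_simps)
  then have hr: "hu = 2 * \<rho>u" using u by simp
  have PfuGt: "lor4 (Pj fu) Gt = - hu"
  proof -
    have "lor4 Gt fu = 0"
    proof -
      have "u * lor4 Gt fu = lor4 \<eta> fu + lor4 n0 fu" by (simp add: \<eta>_def)
      then show ?thesis using efu n0fu u by simp
    qed
    then show ?thesis by (simp add: Pj_eq lor4_E4 sGt hu_def sym[of fu Gt])
  qed
  have Gteta: "lor4 Gt \<eta> = - s" by (simp add: \<eta>_def GtGt s_def sym[of Gt n0])
  have Gtfu: "lor4 Gt fu = 0" and Gtfv: "lor4 Gt fv = 0"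
  proof -
    have "u * lor4 Gt fu = lor4 \<eta> fu + lor4 n0 fu" by (simp add: \<eta>_def)
    then show "lor4 Gt fu = 0" using efu n0fu u by simp
    have "u * lor4 Gt fv = lor4 \<eta> fv + lor4 n0 fv" by (simp add: \<eta>_def)
    then show "lor4 Gt fv = 0" using efv n0fv u by simp
  qed
  define X where "X = fu + (2 * (lor4 (Pj fu) Gt + lor4 n0 Gtu)) *\<^sub>R Gt + (2 * lor4 n0 Gt) *\<^sub>R Gtu"
  have X1: "lor4 X fu = 0"
  proof -
    have "lor4 X fu = lam + 2 * s * \<alpha>" by (simp add: X_def fuu Gtfu s_def \<alpha>_def)
    also have "\<dots> = lam + (u * s) * lam" using a by (simp add: algebra_simps)
    finally show ?thesis using us by simp
  qed
  have X2: "lor4 X fv = 0" by (simp add: X_def fuv Gtfv b0[unfolded \<beta>_def])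
  have X3: "lor4 X \<eta> = 0"
  proof -
    have "lor4 X \<eta> = 2 * (-hu + \<rho>u) * (- s) + 2 * s * (-\<rho>u)"
      by (simp add: X_def b13 PfuGt Gteta Gtu_eta s_def \<rho>u_def sym[of n0 Gtu])
    then show ?thesis using hr by (simp add: algebra_simps)
  qed
  have X4: "lor4 X n0 = 0"
  proof -
    have "lor4 X n0 = 2 * (-hu + \<rho>u) * s + 2 * s * \<rho>u"
      by (simp add: X_def b14 PfuGt s_def \<rho>u_def sym[of n0 Gtu] sym[of n0 Gt])
    then show ?thesis using hr by (simp add: algebra_simps)
  qed
  show ?thesis using basis4_zero[OF B X1 X2 X3 X4] by (simp add: X_def)
qed

lemma pd_lor4:
  assumes "F differentiable (at w)" "K differentiable (at w)"
  shows "pd d (\<lambda>w. lor4 (F w) (K w)) w = lor4 (pd d F w) (K w) + lor4 (F w) (pd d K w)"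
  using pd_bilin[OF bb_lor4 assms] .

lemma pd_lor3:
  assumes "F differentiable (at w)" "K differentiable (at w)"
  shows "pd d (\<lambda>w. lor3 (F w) (K w)) w = lor3 (pd d F w) (K w) + lor3 (F w) (pd d K w)"
  using pd_bilin[OF bb_lor3 assms] .

lemma pd_const_on:
  assumes "open \<Omega>" "z \<in> \<Omega>" "\<And>w. w \<in> \<Omega> \<Longrightarrow> k w = c"
  shows "pd d k z = 0"
proof -
  have "pd d k z = pd d (\<lambda>w. c) z" using pd_local[OF assms(1,2)] assms(3) by metis
  then show ?thesis by simp
qed

lemma bl_Pj: "bounded_linear Pj"
  unfolding Pj_def[abs_def] by (intro bounded_linear_Pair bounded_linear_fst bounded_linear_zero)

lemma bl_pair0: "bounded_linear (\<lambda>x::L3. (x, 0::real))"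
  by (intro bounded_linear_Pair bounded_linear_ident bounded_linear_zero)

lemma pd_pair_const:
  assumes "g differentiable (at w)"
  shows "pd d (\<lambda>w. (g w, c::real)) w = (pd d g w, 0)"
proof -
  have "((\<lambda>w. (g w, c)) has_derivative (\<lambda>h. (pd h g w, 0))) (at w)"
    using has_derivative_Pair[OF pd_works[OF assms] has_derivative_const[of c]] by simp
  then show ?thesis by (rule pd_unique)
qed

lemma smooth_pair_const:
  fixes g :: "complex \<Rightarrow> L3"
  assumes "open \<Omega>" "smooth_on \<Omega> g"
  shows "smooth_on \<Omega> (\<lambda>w. (g w, c::real))"
proof -
  have "smooth_on \<Omega> (\<lambda>w. (g w, 0::real) + (0, c))"
    by (rule smooth_add[OF assms(1) smooth_lin[OF assms(1) bl_pair0 assms(2)] smooth_const])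
  then show ?thesis by simp
qed

lemma lor4_Pj: "lor4 (Pj x) y = lor4 (Pj x) (Pj y)" "lor4 y (Pj x) = lor4 (Pj y) (Pj x)"
  by (simp_all add: Pj_def lor4_def)

lemma normal_exists:
  fixes f :: "complex \<Rightarrow> L4"
  assumes NH2: "fst (f w) \<in> H2"
    and o1: "lor4 (Pj (f w)) (pd 1 f w) = 0" and o2: "lor4 (Pj (f w)) (pd \<i> f w) = 0"
    and c1: "lor4 (pd 1 f w) (pd 1 f w) = lor4 (pd \<i> f w) (pd \<i> f w)"
    and c2: "lor4 (pd 1 f w) (pd \<i> f w) = 0" and c3: "lor4 (pd 1 f w) (pd 1 f w) > 0"
    and rvp: "\<And>\<eta>. unit_normal f w \<eta> \<Longrightarrow> snd \<eta> \<noteq> 0"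
  shows "\<exists>\<eta>. unit_normal f w \<eta> \<and> snd \<eta> > 0"
proof -
  have PjN: "Pj (f w) = (fst (f w), 0)" by (simp add: Pj_def)
  have nn: "lor4 (Pj (f w)) (Pj (f w)) = -1" using NH2 by (simp add: PjN H2_def)
  obtain w0 where w0: "w0 \<noteq> 0" "lor4 w0 (pd 1 f w) = 0" "lor4 w0 (pd \<i> f w) = 0" "lor4 w0 (Pj (f w)) = 0"
  proof -
    have a1: "lor4 (pd 1 f w) (Pj (f w)) = 0" "lor4 (pd \<i> f w) (Pj (f w)) = 0"
      using o1 o2 lor4_sym by metis+
    have a2: "lor4 (pd 1 f w) (pd 1 f w) \<noteq> 0" "lor4 (pd \<i> f w) (pd \<i> f w) \<noteq> 0"
      "lor4 (Pj (f w)) (Pj (f w)) \<noteq> 0" using c1 c3 nn by auto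
    show ?thesis using exists_orth3[OF c2 a1 a2] that by blast
  qed
  have pos: "lor4 w0 w0 > 0"
    by (rule orth_timelike_spacelike[OF NH2 _ w0(1)]) (use w0(4) PjN in simp)
  define \<eta>1 where "\<eta>1 = (1 / sqrt (lor4 w0 w0)) *\<^sub>R w0"
  have un1: "unit_normal f w \<eta>1"
    unfolding unit_normal_def \<eta>1_def using w0 pos PjN by (simp add: power2_eq_square[symmetric])
  have ne: "snd \<eta>1 \<noteq> 0" using rvp un1 by blast
  show ?thesis
  proof (cases "snd \<eta>1 > 0")
    case True then show ?thesis using un1 by blast
  next
    case False
    then have "snd (-\<eta>1) > 0" using ne by simp
    moreover have "unit_normal f w (-\<eta>1)" using un1 by (simp add: unit_normal_def)
    ultimately show ?thesis by blast
  qed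
qed

lemma diff_bilin_at:
  fixes F :: "complex \<Rightarrow> 'a::real_normed_vector" and K :: "complex \<Rightarrow> 'b::real_normed_vector"
  assumes "bounded_bilinear b" "F differentiable (at w)" "K differentiable (at w)"
  shows "(\<lambda>w. b (F w) (K w)) differentiable (at w)"
  using bounded_bilinear.FDERIV[OF assms(1) pd_works[OF assms(2)] pd_works[OF assms(3)]]
  unfolding differentiable_def by blast

lemma diff_lin_at:
  fixes F :: "complex \<Rightarrow> 'a::real_normed_vector"
  assumes "bounded_linear L" "F differentiable (at w)"
  shows "(\<lambda>w. L (F w)) differentiable (at w)"
  using bounded_linear.has_derivative[OF assms(1) pd_works[OF assms(2)]]
  unfolding differentiable_def by blast

lemma chart_facts:
  assumes rs: "riemann_surface A" and ch: "(U,\<phi>) \<in> A"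
  shows "open (\<phi> ` U)" "inj_on \<phi> U" "open U" "continuous_on U \<phi>"
  using rs ch unfolding riemann_surface_def by auto

lemma loc_at:
  assumes "inj_on \<phi> U" "w \<in> \<phi> ` U"
  shows "the_inv_into U \<phi> w \<in> U" "\<phi> (the_inv_into U \<phi> w) = w" "loc F U \<phi> w = F (the_inv_into U \<phi> w)"
  using assms by (auto simp: loc_def the_inv_into_into f_the_inv_into_f)

lemma ci_chart:
  assumes "conformal_immersion_H2R A \<psi>" "(U,\<phi>) \<in> A"
  shows "smooth_on (\<phi> ` U) (loc \<psi> U \<phi>) \<and> (\<forall>w\<in>\<phi> ` U.
            lor4 (pd 1 (loc \<psi> U \<phi>) w) (pd 1 (loc \<psi> U \<phi>) w) = lor4 (pd \<i> (loc \<psi> U \<phi>) w) (pd \<i> (loc \<psi> U \<phi>) w)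
          \<and> lor4 (pd 1 (loc \<psi> U \<phi>) w) (pd \<i> (loc \<psi> U \<phi>) w) = 0
          \<and> lor4 (pd 1 (loc \<psi> U \<phi>) w) (pd 1 (loc \<psi> U \<phi>) w) > 0)"
proof -
  have "\<forall>(U,\<phi>)\<in>A. smooth_on (\<phi> ` U) (loc \<psi> U \<phi>) \<and>
        (\<forall>z\<in>\<phi> ` U. let f = loc \<psi> U \<phi> in
            lor4 (pd 1 f z) (pd 1 f z) = lor4 (pd \<i> f z) (pd \<i> f z)
          \<and> lor4 (pd 1 f z) (pd \<i> f z) = 0
          \<and> lor4 (pd 1 f z) (pd 1 f z) > 0)"
    using assms(1) unfolding conformal_immersion_H2R_def by blast
  from bspec[OF this assms(2)] show ?thesis unfolding Let_def prod.case .
qed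

lemma cg_chart:
  assumes "conformal_H2 A G" "(U,\<phi>) \<in> A"
  shows "smooth_on (\<phi> ` U) (loc G U \<phi>) \<and> (\<forall>w\<in>\<phi> ` U.
            lor3 (pd 1 (loc G U \<phi>) w) (pd 1 (loc G U \<phi>) w) = lor3 (pd \<i> (loc G U \<phi>) w) (pd \<i> (loc G U \<phi>) w)
          \<and> lor3 (pd 1 (loc G U \<phi>) w) (pd \<i> (loc G U \<phi>) w) = 0)"
proof -
  have "\<forall>(U,\<phi>)\<in>A. smooth_on (\<phi> ` U) (loc G U \<phi>) \<and>
        (\<forall>z\<in>\<phi> ` U. let g = loc G U \<phi> in
            lor3 (pd 1 g z) (pd 1 g z) = lor3 (pd \<i> g z) (pd \<i> g z)
          \<and> lor3 (pd 1 g z) (pd \<i> g z) = 0)"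
    using assms(1) unfolding conformal_H2_def by blast
  from bspec[OF this assms(2)] show ?thesis unfolding Let_def prod.case .
qed

lemma rvp_chart:
  assumes "regular_vertical_projection A \<psi>" "(U,\<phi>) \<in> A" "w \<in> \<phi> ` U" "unit_normal (loc \<psi> U \<phi>) w \<eta>"
  shows "snd \<eta> \<noteq> 0"
proof -
  have "\<forall>(U,\<phi>)\<in>A. \<forall>z\<in>\<phi> ` U. \<forall>\<eta>. unit_normal (loc \<psi> U \<phi>) z \<eta> \<longrightarrow> snd \<eta> \<noteq> 0"
    using assms(1) unfolding regular_vertical_projection_def by blast
  from bspec[OF this assms(2)] show ?thesis using assms(3,4) unfolding prod.case by blast
qed

lemma cmc_chart:
  assumes "cmc_canonical A \<psi> H0" "(U,\<phi>) \<in> A" "w \<in> \<phi> ` U" "unit_normal (loc \<psi> U \<phi>) w \<eta>" "snd \<eta> > 0"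
  shows "mean_curv (loc \<psi> U \<phi>) w \<eta> = H0"
proof -
  have "\<forall>(U,\<phi>)\<in>A. \<forall>z\<in>\<phi> ` U. \<forall>\<eta>. unit_normal (loc \<psi> U \<phi>) z \<eta> \<and> snd \<eta> > 0 \<longrightarrow> mean_curv (loc \<psi> U \<phi>) z \<eta> = H0"
    using assms(1) unfolding cmc_canonical_def by blast
  from bspec[OF this assms(2)] show ?thesis using assms(3,4,5) unfolding prod.case by blast
qed

lemma hg_chart:
  assumes "hyperbolic_gauss_map A \<psi> G" "(U,\<phi>) \<in> A" "p \<in> U" "unit_normal (loc \<psi> U \<phi>) (\<phi> p) \<eta>" "snd \<eta> > 0"
  shows "(G p, 1) = (1 / snd \<eta>) *\<^sub>R (\<eta> + (fst (\<psi> p), 0))"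
proof -
  have "\<forall>(U,\<phi>)\<in>A. \<forall>p\<in>U. \<forall>\<eta>. unit_normal (loc \<psi> U \<phi>) (\<phi> p) \<eta> \<and> snd \<eta> > 0
         \<longrightarrow> (G p, 1) = (1 / snd \<eta>) *\<^sub>R (\<eta> + (fst (\<psi> p), 0))"
    using assms(1) unfolding hyperbolic_gauss_map_def by blast
  from bspec[OF this assms(2)] show ?thesis using assms(3,4,5) unfolding prod.case by blast
qed

lemma chart_a:
  fixes \<psi> :: "'a::t2_space \<Rightarrow> L4" and G :: "'a \<Rightarrow> L3"
  assumes rs: "riemann_surface A" and ci: "conformal_immersion_H2R A \<psi>"
    and rvp: "regular_vertical_projection A \<psi>"
    and cmc: "cmc_canonical A \<psi> (1/2)" and hg: "hyperbolic_gauss_map A \<psi> G" and cg: "conformal_H2 A G"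
    and ch: "(U,\<phi>) \<in> A" and z: "z \<in> \<phi> ` U"
  shows "((\<lambda>w. loc \<psi> U \<phi> w + (2 * lor4 (Pj (loc \<psi> U \<phi> w)) (loc G U \<phi> w, 1)) *\<^sub>R (loc G U \<phi> w, 1))
           has_derivative (\<lambda>d. 0)) (at z)"
proof -
  define \<Omega> where "\<Omega> = \<phi> ` U"
  define f where "f = loc \<psi> U \<phi>"
  define g where "g = loc G U \<phi>"
  have \<Omega>: "open \<Omega>" and inj: "inj_on \<phi> U" using chart_facts[OF rs ch] by (auto simp: \<Omega>_def)
  have zO: "z \<in> \<Omega>" using z by (simp add: \<Omega>_def)
  have ci1: "\<forall>p. fst (\<psi> p) \<in> H2" using ci by (simp add: conformal_immersion_H2R_def)
  have sf: "smooth_on \<Omega> f" using ci_chart[OF ci ch] by (simp add: f_def \<Omega>_def)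
  have conff: "lor4 (pd 1 f w) (pd 1 f w) = lor4 (pd \<i> f w) (pd \<i> f w)
          \<and> lor4 (pd 1 f w) (pd \<i> f w) = 0 \<and> lor4 (pd 1 f w) (pd 1 f w) > 0" if "w \<in> \<Omega>" for w
    using ci_chart[OF ci ch] that unfolding f_def \<Omega>_def by blast
  have gH2: "\<forall>p. G p \<in> H2" using cg by (simp add: conformal_H2_def)
  have sg: "smooth_on \<Omega> g" using cg_chart[OF cg ch] by (simp add: g_def \<Omega>_def)
  have confg: "lor3 (pd 1 g w) (pd 1 g w) = lor3 (pd \<i> g w) (pd \<i> g w)
          \<and> lor3 (pd 1 g w) (pd \<i> g w) = 0" if "w \<in> \<Omega>" for w
    using cg_chart[OF cg ch] that unfolding g_def \<Omega>_def by blast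
  have rvpw: "\<And>\<eta>. unit_normal f w \<eta> \<Longrightarrow> snd \<eta> \<noteq> 0" if "w \<in> \<Omega>" for w
    using rvp_chart[OF rvp ch] that unfolding f_def \<Omega>_def by blast
  have cmcw: "\<And>\<eta>. unit_normal f w \<eta> \<Longrightarrow> snd \<eta> > 0 \<Longrightarrow> mean_curv f w \<eta> = 1/2" if "w \<in> \<Omega>" for w
    using cmc_chart[OF cmc ch] that unfolding f_def \<Omega>_def by blast
  have hgw: "(g w, 1) = (1 / snd \<eta>) *\<^sub>R (\<eta> + Pj (f w))"
    if "w \<in> \<Omega>" "unit_normal f w \<eta>" "snd \<eta> > 0" for w \<eta>
  proof -
    define p where "p = the_inv_into U \<phi> w"
    have p: "p \<in> U" "\<phi> p = w" "f w = \<psi> p" "g w = G p"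
      using loc_at[OF inj, of w] that(1) by (auto simp: p_def \<Omega>_def f_def g_def)
    have "(G p, 1) = (1 / snd \<eta>) *\<^sub>R (\<eta> + (fst (\<psi> p), 0))"
      using hg_chart[OF hg ch p(1)] that(2,3) p(2,3) by (simp add: f_def)
    then show ?thesis using p by (simp add: Pj_def)
  qed
  have NH2: "fst (f w) \<in> H2" for w using ci1 by (simp add: f_def loc_def)
  have GH2: "g w \<in> H2" for w using gH2 by (simp add: g_def loc_def)
  define Gt where "Gt w = (g w, 1::real)" for w
  define n0 where "n0 w = Pj (f w)" for w
  have df: "f differentiable (at w)" if "w \<in> \<Omega>" for w using smooth_at[OF sf \<Omega> that] .
  have dg: "g differentiable (at w)" if "w \<in> \<Omega>" for w using smooth_at[OF sg \<Omega> that] .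
  have dfd: "pd d f differentiable (at w)" if "w \<in> \<Omega>" for w d using smooth_at[OF smooth_pd[OF sf] \<Omega> that] .
  have dGt: "Gt differentiable (at w)" if "w \<in> \<Omega>" for w
    unfolding Gt_def[abs_def] using smooth_at[OF smooth_pair_const[OF \<Omega> sg] \<Omega> that] .
  have dn0: "n0 differentiable (at w)" if "w \<in> \<Omega>" for w
    unfolding n0_def[abs_def] using diff_lin_at[OF bl_Pj df[OF that]] .
  have pGt: "pd d Gt w = (pd d g w, 0)" if "w \<in> \<Omega>" for w d
    unfolding Gt_def[abs_def] using pd_pair_const[OF dg[OF that]] .
  have pn0: "pd d n0 w = Pj (pd d f w)" if "w \<in> \<Omega>" for w d
    unfolding n0_def[abs_def] using pd_lin[OF bl_Pj df[OF that]] .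
  have I1: "lor4 (n0 w) (pd d f w) = 0" if "w \<in> \<Omega>" for w d
  proof -
    have c: "(\<lambda>w. lor4 (n0 w) (n0 w)) = (\<lambda>w. -1)"
      using NH2 by (auto simp: n0_def Pj_def H2_def)
    have "0 = pd d (\<lambda>w. lor4 (n0 w) (n0 w)) w" by (simp add: c)
    also have "\<dots> = lor4 (pd d n0 w) (n0 w) + lor4 (n0 w) (pd d n0 w)"
      by (rule pd_lor4[OF dn0[OF that] dn0[OF that]])
    also have "\<dots> = 2 * lor4 (n0 w) (pd d f w)"
      by (simp add: pn0[OF that] n0_def lor4_sym[of "Pj (pd d f w)"] lor4_Pj(1)[of "f w" "pd d f w"])
    finally show ?thesis by simp
  qed
  have nrm: "\<exists>u>0. unit_normal f w (u *\<^sub>R Gt w - n0 w)" if wO: "w \<in> \<Omega>" for w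
  proof -
    obtain \<eta> where \<eta>: "unit_normal f w \<eta>" "snd \<eta> > 0"
      using normal_exists[OF NH2 I1[OF wO, of 1, unfolded n0_def] I1[OF wO, of \<i>, unfolded n0_def]]
        conff[OF wO] rvpw[OF wO] by blast
    have "Gt w = (1 / snd \<eta>) *\<^sub>R (\<eta> + n0 w)" using hgw[OF wO \<eta>] by (simp add: Gt_def n0_def)
    then have "\<eta> = snd \<eta> *\<^sub>R Gt w - n0 w" using \<eta>(2) by simp
    then show ?thesis using \<eta> by metis
  qed
  have I2: "lor4 (Gt w) (pd d f w) = 0" if wO: "w \<in> \<Omega>" and dd: "d = 1 \<or> d = \<i>" for w d
  proof -
    obtain u where u: "u > 0" "unit_normal f w (u *\<^sub>R Gt w - n0 w)" using nrm[OF wO] by blast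
    have "lor4 (u *\<^sub>R Gt w - n0 w) (pd d f w) = 0" using u(2) dd unfolding unit_normal_def by auto
    then have "u * lor4 (Gt w) (pd d f w) = 0" using I1[OF wO] by simp
    then show ?thesis using u(1) by simp
  qed
  have I3: "lor4 (Gt w) (Gt w) = 0" for w using GH2[of w] by (simp add: Gt_def H2_def)
  have J1: "lor4 (Pj (pd d f z)) (pd d f z) + lor4 (n0 z) (pd d (pd d f) z) = 0" for d
  proof -
    have "0 = pd d (\<lambda>w. lor4 (n0 w) (pd d f w)) z"
      using pd_const_on[OF \<Omega> zO, of "\<lambda>w. lor4 (n0 w) (pd d f w)" 0 d] I1 by simp
    also have "\<dots> = lor4 (pd d n0 z) (pd d f z) + lor4 (n0 z) (pd d (pd d f) z)"
      by (rule pd_lor4[OF dn0[OF zO] dfd[OF zO]])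
    finally show ?thesis by (simp add: pn0[OF zO])
  qed
  have J2: "lor4 (pd d' Gt z) (pd d f z) + lor4 (Gt z) (pd d' (pd d f) z) = 0" if "d = 1 \<or> d = \<i>" for d d'
  proof -
    have "0 = pd d' (\<lambda>w. lor4 (Gt w) (pd d f w)) z"
      using pd_const_on[OF \<Omega> zO, of "\<lambda>w. lor4 (Gt w) (pd d f w)" 0 d'] I2 that by simp
    also have "\<dots> = lor4 (pd d' Gt z) (pd d f z) + lor4 (Gt z) (pd d' (pd d f) z)"
      by (rule pd_lor4[OF dGt[OF zO] dfd[OF zO]])
    finally show ?thesis by simp
  qed
  have J3: "lor4 (Gt z) (pd d Gt z) = 0" for d
  proof -
    have c: "(\<lambda>w. lor4 (Gt w) (Gt w)) = (\<lambda>w. 0)" using I3 by auto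
    have "0 = pd d (\<lambda>w. lor4 (Gt w) (Gt w)) z" by (simp add: c)
    also have "\<dots> = lor4 (pd d Gt z) (Gt z) + lor4 (Gt z) (pd d Gt z)"
      by (rule pd_lor4[OF dGt[OF zO] dGt[OF zO]])
    finally show ?thesis by (simp add: lor4_sym[of "pd d Gt z"])
  qed
  have symm: "lor4 (Gt z) (pd \<i> (pd 1 f) z) = lor4 (Gt z) (pd 1 (pd \<i> f) z)"
  proof -
    have bl: "bounded_linear (lor4 (Gt z))" by (rule bounded_bilinear.bounded_linear_right[OF bb_lor4])
    have ss: "smooth_on \<Omega> (\<lambda>w. lor4 (Gt z) (f w))" by (rule smooth_lin[OF \<Omega> bl sf])
    have "pd \<i> (pd 1 (\<lambda>w. lor4 (Gt z) (f w))) z = pd 1 (pd \<i> (\<lambda>w. lor4 (Gt z) (f w))) z"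
      by (rule schwarz[OF \<Omega> zO ss])
    moreover have "pd \<i> (pd 1 (\<lambda>w. lor4 (Gt z) (f w))) z = lor4 (Gt z) (pd \<i> (pd 1 f) z)"
      using iter_pd_lin[OF \<Omega> bl sf zO, of "[\<i>,1]"] by simp
    moreover have "pd 1 (pd \<i> (\<lambda>w. lor4 (Gt z) (f w))) z = lor4 (Gt z) (pd 1 (pd \<i> f) z)"
      using iter_pd_lin[OF \<Omega> bl sf zO, of "[1,\<i>]"] by simp
    ultimately show ?thesis by simp
  qed
  obtain u where u: "u > 0" "unit_normal f z (u *\<^sub>R Gt z - n0 z)" using nrm[OF zO] by blast
  define fu where "fu = pd 1 f z"
  define fv where "fv = pd \<i> f z"
  define lam where "lam = lor4 fu fu"
  have sGt: "snd (Gt z) = 1" by (simp add: Gt_def)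
  have seta: "snd (u *\<^sub>R Gt z - n0 z) = u" by (simp add: Gt_def n0_def Pj_def)
  have Hm: "lor4 (lap f z) (u *\<^sub>R Gt z - n0 z) = lam"
  proof -
    have "mean_curv f z (u *\<^sub>R Gt z - n0 z) = 1/2" using cmcw[OF zO u(2)] u(1) seta by simp
    then show ?thesis using conff[OF zO] by (simp add: mean_curv_def lam_def fu_def divide_simps)
  qed
  have H: "- u * (lor4 (pd 1 Gt z) fu + lor4 (pd \<i> Gt z) fv) + lor4 (Pj fu) fu + lor4 (Pj fv) fv = lam"
  proof -
    have "lor4 (lap f z) (u *\<^sub>R Gt z - n0 z)
       = u * (lor4 (Gt z) (pd 1 (pd 1 f) z) + lor4 (Gt z) (pd \<i> (pd \<i> f) z))
         - (lor4 (n0 z) (pd 1 (pd 1 f) z) + lor4 (n0 z) (pd \<i> (pd \<i> f) z))"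
      by (simp add: lap_def lor4_sym[of _ "Gt z"] lor4_sym[of _ "n0 z"] algebra_simps)
    also have "\<dots> = - u * (lor4 (pd 1 Gt z) fu + lor4 (pd \<i> Gt z) fv) + lor4 (Pj fu) fu + lor4 (Pj fv) fv"
    proof -
      have e1: "lor4 (Gt z) (pd 1 (pd 1 f) z) = - lor4 (pd 1 Gt z) fu" using J2[of 1 1] unfolding fu_def by simp
      have e2: "lor4 (Gt z) (pd \<i> (pd \<i> f) z) = - lor4 (pd \<i> Gt z) fv" using J2[of \<i> \<i>] unfolding fv_def by simp
      have e3: "lor4 (n0 z) (pd 1 (pd 1 f) z) = - lor4 (Pj fu) fu" using J1[of 1] unfolding fu_def by linarith
      have e4: "lor4 (n0 z) (pd \<i> (pd \<i> f) z) = - lor4 (Pj fv) fv" using J1[of \<i>] unfolding fv_def by linarith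
      show ?thesis by (simp add: e1 e2 e3 e4 algebra_simps)
    qed
    finally show ?thesis using Hm by simp
  qed
  have cu: "unit_normal f z (u *\<^sub>R Gt z - n0 z)" by (rule u(2))
  have efu: "lor4 (u *\<^sub>R Gt z - n0 z) fu = 0" and efv: "lor4 (u *\<^sub>R Gt z - n0 z) fv = 0"
    and en0: "lor4 (u *\<^sub>R Gt z - n0 z) (n0 z) = 0" and ee: "lor4 (u *\<^sub>R Gt z - n0 z) (u *\<^sub>R Gt z - n0 z) = 1"
    using cu unfolding unit_normal_def fu_def fv_def n0_def Pj_def by auto
  have n0n0: "lor4 (n0 z) (n0 z) = -1" using NH2[of z] by (simp add: n0_def Pj_def H2_def)
  have sn0: "snd (n0 z) = 0" by (simp add: n0_def Pj_def)
  have cf: "lor4 fu fu = lam" "lor4 fv fv = lam" "lor4 fu fv = 0" "lam > 0"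
    using conff[OF zO] by (auto simp: fu_def fv_def lam_def)
  have n0f: "lor4 (n0 z) fu = 0" "lor4 (n0 z) fv = 0" using I1[OF zO] by (auto simp: fu_def fv_def)
  have sGtd: "snd (pd d Gt z) = 0" for d by (simp add: pGt[OF zO])
  have confG: "lor4 (pd 1 Gt z) (pd 1 Gt z) = lor4 (pd \<i> Gt z) (pd \<i> Gt z)" "lor4 (pd 1 Gt z) (pd \<i> Gt z) = 0"
    using confg[OF zO] by (auto simp: pGt[OF zO])
  have sy: "lor4 (pd \<i> Gt z) fu = lor4 (pd 1 Gt z) fv"
    using J2[of 1 \<i>] J2[of \<i> 1] symm by (simp add: fu_def fv_def)
  have core1: "fu + (2 * (lor4 (Pj fu) (Gt z) + lor4 (n0 z) (pd 1 Gt z))) *\<^sub>R Gt z + (2 * lor4 (n0 z) (Gt z)) *\<^sub>R pd 1 Gt z = 0"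
    by (rule core_a[OF cf n0n0 n0f sn0 efu efv en0 ee u(1) I3 J3 J3 sGt sGtd sGtd confG sy H])
  have core2: "fv + (2 * (lor4 (Pj fv) (Gt z) + lor4 (n0 z) (pd \<i> Gt z))) *\<^sub>R Gt z + (2 * lor4 (n0 z) (Gt z)) *\<^sub>R pd \<i> Gt z = 0"
  proof (rule core_a[of fv lam fu "n0 z" u "Gt z"])
    show "- u * (lor4 (pd \<i> Gt z) fv + lor4 (pd 1 Gt z) fu) + lor4 (Pj fv) fv + lor4 (Pj fu) fu = lam"
      using H by (simp add: algebra_simps)
  qed (use cf n0n0 n0f sn0 efu efv en0 ee u(1) I3 J3 sGt sGtd confG sy lor4_sym[of "pd 1 Gt z" "pd \<i> Gt z"] lor4_sym[of fu fv] in simp_all)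
  define S where "S w = 2 * lor4 (n0 w) (Gt w)" for w
  have dS: "S differentiable (at z)"
    unfolding S_def[abs_def]
    by (rule diff_lin_at[OF bounded_linear_mult_right diff_bilin_at[OF bb_lor4 dn0[OF zO] dGt[OF zO]]])
  have pS: "pd d S z = 2 * (lor4 (Pj (pd d f z)) (Gt z) + lor4 (n0 z) (pd d Gt z))" for d
  proof -
    have "pd d S z = 2 * pd d (\<lambda>w. lor4 (n0 w) (Gt w)) z"
      unfolding S_def[abs_def]
      by (rule pd_lin[OF bounded_linear_mult_right diff_bilin_at[OF bb_lor4 dn0[OF zO] dGt[OF zO]]])
    also have "\<dots> = 2 * (lor4 (pd d n0 z) (Gt z) + lor4 (n0 z) (pd d Gt z))"
      using pd_lor4[OF dn0[OF zO] dGt[OF zO]] by simp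
    finally show ?thesis by (simp add: pn0[OF zO])
  qed
  define Q where "Q w = f w + S w *\<^sub>R Gt w" for w
  have dSG: "(\<lambda>w. S w *\<^sub>R Gt w) differentiable (at z)"
    by (rule diff_bilin_at[OF bounded_bilinear_scaleR dS dGt[OF zO]])
  have pQ: "pd d Q z = pd d f z + (2 * (lor4 (Pj (pd d f z)) (Gt z) + lor4 (n0 z) (pd d Gt z))) *\<^sub>R Gt z
                + (2 * lor4 (n0 z) (Gt z)) *\<^sub>R pd d Gt z" for d
  proof -
    have "pd d Q z = pd d f z + pd d (\<lambda>w. S w *\<^sub>R Gt w) z"
      unfolding Q_def[abs_def] by (rule pd_add[OF df[OF zO] dSG])
    also have "pd d (\<lambda>w. S w *\<^sub>R Gt w) z = pd d S z *\<^sub>R Gt z + S z *\<^sub>R pd d Gt z"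
      by (rule pd_bilin[OF bounded_bilinear_scaleR dS dGt[OF zO]])
    finally show ?thesis by (simp add: pS S_def)
  qed
  have Q1: "pd 1 Q z = 0" using core1 pQ[of 1] by (simp add: fu_def)
  have Qi: "pd \<i> Q z = 0" using core2 pQ[of \<i>] by (simp add: fv_def)
  have dQ: "Q differentiable (at z)"
    unfolding Q_def[abs_def] using differentiable_add[OF df[OF zO] dSG] by simp
  have lin: "linear (\<lambda>d. pd d Q z)" using pd_works[OF dQ] has_derivative_linear by blast
  have "pd d Q z = 0" for d
  proof -
    have "d = Re d *\<^sub>R 1 + Im d *\<^sub>R \<i>" by (simp add: complex_eq_iff)
    then have "pd d Q z = Re d *\<^sub>R pd 1 Q z + Im d *\<^sub>R pd \<i> Q z"
      using linear_add[OF lin] linear_cmul[OF lin] by metis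
    then show ?thesis using Q1 Qi by simp
  qed
  then have "(Q has_derivative (\<lambda>d. 0)) (at z)" using pd_works[OF dQ] by simp
  moreover have "Q = (\<lambda>w. loc \<psi> U \<phi> w + (2 * lor4 (Pj (loc \<psi> U \<phi> w)) (loc G U \<phi> w, 1)) *\<^sub>R (loc G U \<phi> w, 1))"
    by (simp add: Q_def[abs_def] S_def n0_def Gt_def f_def g_def)
  ultimately show ?thesis by simp
qed

lemma locally_constant_const:
  fixes q :: "'a::topological_space \<Rightarrow> 'b"
  assumes conn: "connected (UNIV :: 'a set)"
    and loc: "\<And>p. \<exists>V. open V \<and> p \<in> V \<and> (\<forall>p'\<in>V. q p' = q p)"
  shows "q p = q p0"
proof -
  define S where "S = {p. q p = q p0}"
  have oS: "open S"
  proof (rule Topological_Spaces.openI)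
    fix p assume pS: "p \<in> S"
    obtain V where V: "open V" "p \<in> V" "\<forall>p'\<in>V. q p' = q p" using loc by blast
    have "V \<subseteq> S" using V(3) pS unfolding S_def by auto
    then show "\<exists>T. open T \<and> p \<in> T \<and> T \<subseteq> S" using V(1,2) by blast
  qed
  have oT: "open (- S)"
  proof (rule Topological_Spaces.openI)
    fix p assume pS: "p \<in> - S"
    obtain V where V: "open V" "p \<in> V" "\<forall>p'\<in>V. q p' = q p" using loc by blast
    have "V \<subseteq> - S" using V(3) pS unfolding S_def by auto
    then show "\<exists>T. open T \<and> p \<in> T \<and> T \<subseteq> - S" using V(1,2) by blast
  qed
  have "S \<inter> UNIV = {} \<or> (- S) \<inter> UNIV = {}"
    by (rule connectedD[OF conn oS oT]) simp_all
  moreover have "p0 \<in> S" by (simp add: S_def)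
  ultimately have "p \<in> S" by blast
  then show ?thesis by (simp add: S_def)
qed

lemma part_a:
  fixes \<psi> :: "'a::t2_space \<Rightarrow> L4" and G :: "'a \<Rightarrow> L3"
  assumes rs: "riemann_surface A" and conn: "connected (UNIV :: 'a set)"
    and ci: "conformal_immersion_H2R A \<psi>" and rvp: "regular_vertical_projection A \<psi>"
    and cmc: "cmc_canonical A \<psi> (1/2)" and hg: "hyperbolic_gauss_map A \<psi> G" and cg: "conformal_H2 A G"
  shows "\<exists>a\<in>H2. \<exists>c::real. \<forall>p. \<psi> p = (- a, c) - (2 * lor3 a (G p)) *\<^sub>R (G p, 1)"
proof -
  define q where "q p = \<psi> p + (2 * lor3 (fst (\<psi> p)) (G p)) *\<^sub>R (G p, 1)" for p
  have loc: "\<exists>V. open V \<and> p \<in> V \<and> (\<forall>p'\<in>V. q p' = q p)" for p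
  proof -
    have "p \<in> (\<Union>(U,\<phi>)\<in>A. U)" using rs unfolding riemann_surface_def by auto
    then obtain U \<phi> where ch: "(U,\<phi>) \<in> A" and pU: "p \<in> U" by auto
    have oO: "open (\<phi> ` U)" and inj: "inj_on \<phi> U" and oU: "open U" and cont: "continuous_on U \<phi>"
      using chart_facts[OF rs ch] by auto
    define Qf where "Qf w = loc \<psi> U \<phi> w + (2 * lor4 (Pj (loc \<psi> U \<phi> w)) (loc G U \<phi> w, 1)) *\<^sub>R (loc G U \<phi> w, 1)" for w
    have zO: "\<phi> p \<in> \<phi> ` U" using pU by simp
    obtain r where r: "r > 0" "ball (\<phi> p) r \<subseteq> \<phi> ` U" using oO zO open_contains_ball by blast
    have "\<exists>c. \<forall>w\<in>ball (\<phi> p) r. Qf w = c"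
    proof (rule has_derivative_zero_constant[OF convex_ball])
      fix w assume "w \<in> ball (\<phi> p) r"
      then have "w \<in> \<phi> ` U" using r by blast
      then have "(Qf has_derivative (\<lambda>d. 0)) (at w)"
        unfolding Qf_def[abs_def] by (rule chart_a[OF rs ci rvp cmc hg cg ch])
      then show "(Qf has_derivative (\<lambda>h. 0)) (at w within ball (\<phi> p) r)"
        by (rule has_derivative_at_withinI)
    qed
    then obtain c where c: "\<And>w. w \<in> ball (\<phi> p) r \<Longrightarrow> Qf w = c" by blast
    have qQ: "q p' = Qf (\<phi> p')" if "p' \<in> U" for p'
      using that inj by (simp add: Qf_def q_def loc_def the_inv_into_f_f Pj_def)
    define V where "V = \<phi> -` ball (\<phi> p) r \<inter> U"
    have "open V" using cont oU unfolding V_def continuous_on_open_vimage[OF oU] by blast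
    moreover have "p \<in> V" using pU r by (simp add: V_def)
    moreover have "\<forall>p'\<in>V. q p' = q p"
    proof
      fix p' assume "p' \<in> V"
      then have "p' \<in> U" "\<phi> p' \<in> ball (\<phi> p) r" by (auto simp: V_def)
      then show "q p' = q p" using qQ[of p'] qQ[OF pU] c[of "\<phi> p'"] c[of "\<phi> p"] r(1) by simp
    qed
    ultimately show ?thesis by blast
  qed
  obtain p0 :: 'a where True by blast
  have qc: "q p = q p0" for p by (rule locally_constant_const[OF conn loc])
  define a where "a = - fst (q p0)"
  define c where "c = snd (q p0)"
  have ci1: "fst (\<psi> p) \<in> H2" for p using ci by (simp add: conformal_immersion_H2R_def)
  have gH2: "G p \<in> H2" for p using cg by (simp add: conformal_H2_def)
  have GG: "lor3 (G p) (G p) = -1" for p using gH2[of p] by (simp add: H2_def)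
  have NN: "lor3 (fst (\<psi> p)) (fst (\<psi> p)) = -1" for p using ci1[of p] by (simp add: H2_def)
  have aeq: "a = - fst (\<psi> p) - (2 * lor3 (fst (\<psi> p)) (G p)) *\<^sub>R G p" for p
  proof -
    have "fst (q p) = fst (\<psi> p) + (2 * lor3 (fst (\<psi> p)) (G p)) *\<^sub>R G p" by (simp add: q_def)
    then have "a = - (fst (\<psi> p) + (2 * lor3 (fst (\<psi> p)) (G p)) *\<^sub>R G p)" using qc[of p] by (simp add: a_def)
    then show ?thesis by (simp add: algebra_simps)
  qed
  have aG: "lor3 a (G p) = lor3 (fst (\<psi> p)) (G p)" for p
  proof -
    have "lor3 a (G p) = - lor3 (fst (\<psi> p)) (G p) - 2 * lor3 (fst (\<psi> p)) (G p) * lor3 (G p) (G p)"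
      by (simp add: aeq[of p])
    then show ?thesis using GG[of p] by simp
  qed
  have rep: "\<psi> p = (- a, c) - (2 * lor3 a (G p)) *\<^sub>R (G p, 1)" for p
  proof -
    have "(- a, c) = q p" using qc[of p] by (simp add: a_def c_def)
    then show ?thesis by (simp add: q_def aG)
  qed
  have aa: "lor3 a a = -1"
  proof -
    define N where "N = fst (\<psi> p0)"
    define s where "s = lor3 N (G p0)"
    have ae: "a = - N - (2 * s) *\<^sub>R G p0" using aeq[of p0] by (simp add: N_def s_def)
    have "lor3 a a = lor3 N N + 2 * s * lor3 N (G p0) + 2 * s * lor3 (G p0) N + 4 * s * s * lor3 (G p0) (G p0)"
      unfolding ae by (simp add: algebra_simps)
    moreover have "lor3 (G p0) N = s" using lor3_sym[of "G p0" N] by (simp add: s_def)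
    ultimately show ?thesis using NN[of p0] GG[of p0] by (simp add: N_def[symmetric] s_def[symmetric])
  qed
  have "lor3 a (G p0) < 0"
    using aG[of p0] H2_inner_le[OF ci1[of p0] gH2[of p0]] by simp
  then have "fst a > 0" using timelike_fst_pos[OF aa gH2[of p0]] by simp
  then have "a \<in> H2" using aa by (simp add: H2_def)
  then show ?thesis using rep by blast
qed

lemma core_b:
  fixes a g gu gv guu gvv :: L3 and mu t :: real
  assumes aa: "lor3 a a = -1" and gg: "lor3 g g = -1"
    and ggu: "lor3 g gu = 0" and ggv: "lor3 g gv = 0"
    and muu: "lor3 gu gu = mu" and mvv: "lor3 gv gv = mu" and mu: "mu > 0" and guv: "lor3 gu gv = 0"
    and gguu: "lor3 g guu = - mu" and ggvv: "lor3 g gvv = - mu"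
    and t: "t = lor3 a g" and tneg: "t < 0"
  defines "fu \<equiv> - ((2 * lor3 a gu) *\<^sub>R (g, 1::real)) - (2 * t) *\<^sub>R (gu, 0)"
    and "fv \<equiv> - ((2 * lor3 a gv) *\<^sub>R (g, 1::real)) - (2 * t) *\<^sub>R (gv, 0)"
    and "fuu \<equiv> - ((2 * lor3 a guu) *\<^sub>R (g, 1::real)) - (4 * lor3 a gu) *\<^sub>R (gu, 0) - (2 * t) *\<^sub>R (guu, 0)"
    and "fvv \<equiv> - ((2 * lor3 a gvv) *\<^sub>R (g, 1::real)) - (4 * lor3 a gv) *\<^sub>R (gv, 0) - (2 * t) *\<^sub>R (gvv, 0)"
    and "N \<equiv> - a - (2 * t) *\<^sub>R g"
    and "u \<equiv> - 1 / t"
    and "\<eta>0 \<equiv> (- 1 / t) *\<^sub>R (g, 1::real) - (- a - (2 * t) *\<^sub>R g, 0)"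
  shows "lor4 fu fu = lor4 fv fv" "lor4 fu fv = 0" "lor4 fu fu > 0" "lor4 fu fu = 4 * t * t * mu"
    "lor4 \<eta>0 fu = 0" "lor4 \<eta>0 fv = 0" "lor4 \<eta>0 (N, 0) = 0" "lor4 \<eta>0 \<eta>0 = 1"
    "lor4 fu (N, 0) = 0" "lor4 fv (N, 0) = 0" "lor4 (N,0) (N,0) = -1" "snd \<eta>0 = u" "u > 0"
    "lor4 (fuu + fvv) \<eta>0 = lor4 fu fu"
    "lor3 N N = -1" "lor3 N g = t"
proof -
  have s: "lor3 x y = lor3 y x" for x y by (rule lor3_sym)
  have eta': "\<eta>0 = u *\<^sub>R (g, 1::real) - (N, 0)" by (simp add: \<eta>0_def u_def N_def)
  have ggu': "lor3 gu g = 0" and ggv': "lor3 gv g = 0" and guv': "lor3 gv gu = 0"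
    and gguu': "lor3 guu g = - mu" and ggvv': "lor3 gvv g = - mu" and t': "lor3 g a = t"
    using ggu ggv guv gguu ggvv t s by metis+
  note F = aa gg ggu ggv muu mvv guv gguu ggvv ggu' ggv' guv' gguu' ggvv' t'
  define tu where "tu = lor3 a gu"
  define tv where "tv = lor3 a gv"
  define tuu where "tuu = lor3 a guu"
  define tvv where "tvv = lor3 a gvv"
  have su: "lor3 gu a = tu" "lor3 gv a = tv" "lor3 guu a = tuu" "lor3 gvv a = tvv"
    using s by (auto simp: tu_def tv_def tuu_def tvv_def)
  have ut: "u * t = -1" using tneg by (simp add: u_def)
  have upos: "u > 0" using tneg by (simp add: u_def)
  show "u > 0" by (rule upos)
  have NN: "lor3 N N = -1"
  proof -
    have "lor3 N N = lor3 a a + 2 * t * lor3 a g + 2 * t * lor3 g a + 4 * t * t * lor3 g g"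
      by (simp add: N_def algebra_simps)
    then show ?thesis using F t by simp
  qed
  show "lor3 N N = -1" by (rule NN)
  have Ng: "lor3 N g = t" by (simp add: N_def F t[symmetric])
  show "lor3 N g = t" by (rule Ng)
  have gN: "lor3 g N = t" using Ng s by metis
  have guN: "lor3 gu N = - tu" by (simp add: N_def F su)
  have gvN: "lor3 gv N = - tv" by (simp add: N_def F su)
  have guuN: "lor3 guu N = - tuu + 2 * t * mu" by (simp add: N_def F su)
  have gvvN: "lor3 gvv N = - tvv + 2 * t * mu" by (simp add: N_def F su)
  have Ngu: "lor3 N gu = - tu" "lor3 N gv = - tv" "lor3 N guu = - tuu + 2 * t * mu" "lor3 N gvv = - tvv + 2 * t * mu"
    using guN gvN guuN gvvN s by metis+
  have fu': "fu = - ((2 * tu) *\<^sub>R (g, 1::real)) - (2 * t) *\<^sub>R (gu, 0)" by (simp add: fu_def tu_def)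
  have fv': "fv = - ((2 * tv) *\<^sub>R (g, 1::real)) - (2 * t) *\<^sub>R (gv, 0)" by (simp add: fv_def tv_def)
  have fuu': "fuu = - ((2 * tuu) *\<^sub>R (g, 1::real)) - (4 * tu) *\<^sub>R (gu, 0) - (2 * t) *\<^sub>R (guu, 0)"
    by (simp add: fuu_def tuu_def tu_def)
  have fvv': "fvv = - ((2 * tvv) *\<^sub>R (g, 1::real)) - (4 * tv) *\<^sub>R (gv, 0) - (2 * t) *\<^sub>R (gvv, 0)"
    by (simp add: fvv_def tvv_def tv_def)
  have fufu: "lor4 fu fu = 4 * t * t * mu" by (simp add: fu' F algebra_simps)
  show "lor4 fu fu = 4 * t * t * mu" by (rule fufu)
  have fvfv: "lor4 fv fv = 4 * t * t * mu" by (simp add: fv' F algebra_simps)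
  show "lor4 fu fu = lor4 fv fv" using fufu fvfv by simp
  show "lor4 fu fv = 0" by (simp add: fu' fv' F algebra_simps)
  show "lor4 fu fu > 0" using fufu tneg mu by (simp add: mult_pos_pos mult_neg_neg)
  have eg: "lor4 \<eta>0 (g, 1) = - t" by (simp add: eta' F gN Ng)
  have egu: "lor4 \<eta>0 (gu, 0) = tu" by (simp add: eta' F guN Ngu)
  have egv: "lor4 \<eta>0 (gv, 0) = tv" by (simp add: eta' F gvN Ngu)
  have eguu: "lor4 \<eta>0 (guu, 0) = - u * mu + tuu - 2 * t * mu" by (simp add: eta' F guuN Ngu)
  have egvv: "lor4 \<eta>0 (gvv, 0) = - u * mu + tvv - 2 * t * mu" by (simp add: eta' F gvvN Ngu)
  have "lor4 \<eta>0 fu = - ((2 * tu) * lor4 \<eta>0 (g,1)) - (2 * t) * lor4 \<eta>0 (gu, 0)"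
    by (simp only: fu' lor4_diff2 lor4_minus2 lor4_scale2)
  then show "lor4 \<eta>0 fu = 0" by (simp add: eg egu)
  have "lor4 \<eta>0 fv = - ((2 * tv) * lor4 \<eta>0 (g,1)) - (2 * t) * lor4 \<eta>0 (gv, 0)"
    by (simp only: fv' lor4_diff2 lor4_minus2 lor4_scale2)
  then show "lor4 \<eta>0 fv = 0" by (simp add: eg egv)
  show "lor4 \<eta>0 (N, 0) = 0" using ut by (simp add: eta' NN gN Ng)
  show "lor4 \<eta>0 \<eta>0 = 1" using ut by (simp add: eta' NN gN Ng F algebra_simps)
  show "lor4 fu (N, 0) = 0" by (simp add: fu' gN guN Ng Ngu)
  show "lor4 fv (N, 0) = 0" by (simp add: fv' gN gvN Ng Ngu)
  show "lor4 (N,0) (N,0) = -1" by (simp add: NN)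
  show "snd \<eta>0 = u" by (simp add: eta')
  \<comment> \<open>Parseval for a\<close>
  have par: "tu * tu + tv * tv = mu * (t * t - 1)"
  proof -
    have B: "lor4 (g,0) (gu,0) = 0" "lor4 (g,0) (gv,0) = 0" "lor4 (g,0) E4 = 0"
      "lor4 (gu,0) (gv,0) = 0" "lor4 (gu,0) E4 = 0" "lor4 (gv,0) E4 = 0"
      "lor4 (g,0) (g,0) \<noteq> 0" "lor4 (gu,0) (gu,0) \<noteq> 0" "lor4 (gv,0) (gv,0) \<noteq> 0" "lor4 E4 E4 \<noteq> 0"
      using F mu by (simp_all add: lor4_E4 lor4_E4E4)
    have "lor4 (a,0) (a,0) = lor4 (a,0) (g,0) * lor4 (a,0) (g,0) / lor4 (g,0) (g,0)
         + lor4 (a,0) (gu,0) * lor4 (a,0) (gu,0) / lor4 (gu,0) (gu,0)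
         + lor4 (a,0) (gv,0) * lor4 (a,0) (gv,0) / lor4 (gv,0) (gv,0)
         + lor4 (a,0) E4 * lor4 (a,0) E4 / lor4 E4 E4"
      by (rule basis4_inner[OF B])
    then have "-1 = - t * t + tu * tu / mu + tv * tv / mu"
      using F by (simp add: lor4_E4 t[symmetric] tu_def tv_def)
    then show ?thesis using mu by (simp add: field_simps)
  qed
  have "lor4 (fuu + fvv) \<eta>0 = lor4 \<eta>0 fuu + lor4 \<eta>0 fvv" by (simp add: lor4_sym[of _ \<eta>0])
  also have "lor4 \<eta>0 fuu = - ((2 * tuu) * lor4 \<eta>0 (g,1)) - (4 * tu) * lor4 \<eta>0 (gu, 0) - (2 * t) * lor4 \<eta>0 (guu, 0)"
    by (simp only: fuu' lor4_diff2 lor4_minus2 lor4_scale2)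
  also have "lor4 \<eta>0 fvv = - ((2 * tvv) * lor4 \<eta>0 (g,1)) - (4 * tv) * lor4 \<eta>0 (gv, 0) - (2 * t) * lor4 \<eta>0 (gvv, 0)"
    by (simp only: fvv' lor4_diff2 lor4_minus2 lor4_scale2)
  also have "- ((2 * tuu) * lor4 \<eta>0 (g,1)) - (4 * tu) * lor4 \<eta>0 (gu, 0) - (2 * t) * lor4 \<eta>0 (guu, 0)
     + (- ((2 * tvv) * lor4 \<eta>0 (g,1)) - (4 * tv) * lor4 \<eta>0 (gv, 0) - (2 * t) * lor4 \<eta>0 (gvv, 0))
     = - 4 * (tu * tu + tv * tv) + 2 * t * u * mu * 2 + 8 * t * t * mu"
    by (simp add: eg egu egv eguu egvv algebra_simps)
  also have "\<dots> = - 4 * (mu * (t * t - 1)) + 4 * (t * u) * mu + 8 * t * t * mu"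
    using par by (simp add: algebra_simps)
  also have "\<dots> = 4 * t * t * mu" using ut by (simp add: algebra_simps)
  finally show "lor4 (fuu + fvv) \<eta>0 = lor4 fu fu" using fufu by simp
qed

lemma normal_unique:
  fixes fu fv e0 n0 \<eta> :: L4
  assumes "lor4 fu fv = 0" "lor4 fu e0 = 0" "lor4 fu n0 = 0" "lor4 fv e0 = 0" "lor4 fv n0 = 0" "lor4 e0 n0 = 0"
    "lor4 fu fu \<noteq> 0" "lor4 fv fv \<noteq> 0" "lor4 e0 e0 = 1" "lor4 n0 n0 \<noteq> 0"
    and h: "lor4 \<eta> fu = 0" "lor4 \<eta> fv = 0" "lor4 \<eta> n0 = 0" "lor4 \<eta> \<eta> = 1"
  shows "\<exists>c. \<eta> = c *\<^sub>R e0 \<and> c * c = 1"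
proof -
  have nz: "lor4 e0 e0 \<noteq> 0" using assms(9) by simp
  have "\<eta> = (lor4 \<eta> fu / lor4 fu fu) *\<^sub>R fu + (lor4 \<eta> fv / lor4 fv fv) *\<^sub>R fv
           + (lor4 \<eta> e0 / lor4 e0 e0) *\<^sub>R e0 + (lor4 \<eta> n0 / lor4 n0 n0) *\<^sub>R n0"
    by (rule basis4[OF assms(1-8) nz assms(10)])
  then have e: "\<eta> = lor4 \<eta> e0 *\<^sub>R e0" using h assms(9) by simp
  have "lor4 \<eta> \<eta> = lor4 \<eta> e0 * lor4 \<eta> e0 * lor4 e0 e0"
    by (subst e, subst (2) e) simp
  then have "lor4 \<eta> e0 * lor4 \<eta> e0 = 1" using h(4) assms(9) by simp
  then show ?thesis using e by blast
qed

lemma bl_2lor3: "bounded_linear (\<lambda>x. 2 * lor3 a x)"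
  by (rule bounded_linear_compose[OF bounded_linear_mult_right bounded_bilinear.bounded_linear_right[OF bb_lor3]])

lemma pd_SP:
  fixes X Y :: "complex \<Rightarrow> L3"
  assumes "X differentiable (at w)" "Y differentiable (at w)"
  shows "pd d (\<lambda>w. (2 * lor3 a (X w)) *\<^sub>R (Y w, c::real)) w
       = (2 * lor3 a (pd d X w)) *\<^sub>R (Y w, c) + (2 * lor3 a (X w)) *\<^sub>R (pd d Y w, 0)"
proof -
  have dS: "(\<lambda>w. 2 * lor3 a (X w)) differentiable (at w)" by (rule diff_lin_at[OF bl_2lor3 assms(1)])
  have dP: "(\<lambda>w. (Y w, c)) differentiable (at w)"
    using has_derivative_Pair[OF pd_works[OF assms(2)] has_derivative_const[of c]] unfolding differentiable_def by blast
  have "pd d (\<lambda>w. (2 * lor3 a (X w)) *\<^sub>R (Y w, c)) w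
      = pd d (\<lambda>w. 2 * lor3 a (X w)) w *\<^sub>R (Y w, c) + (2 * lor3 a (X w)) *\<^sub>R pd d (\<lambda>w. (Y w, c)) w"
    by (rule pd_bilin[OF bounded_bilinear_scaleR dS dP])
  also have "pd d (\<lambda>w. 2 * lor3 a (X w)) w = 2 * lor3 a (pd d X w)"
    by (rule pd_lin[OF bl_2lor3 assms(1)])
  also have "pd d (\<lambda>w. (Y w, c)) w = (pd d Y w, 0)" by (rule pd_pair_const[OF assms(2)])
  finally show ?thesis .
qed

lemma dSP:
  fixes X Y :: "complex \<Rightarrow> L3"
  assumes "X differentiable (at w)" "Y differentiable (at w)"
  shows "(\<lambda>w. (2 * lor3 a (X w)) *\<^sub>R (Y w, c::real)) differentiable (at w)"
proof -
  have dS: "(\<lambda>w. 2 * lor3 a (X w)) differentiable (at w)" by (rule diff_lin_at[OF bl_2lor3 assms(1)])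
  have dP: "(\<lambda>w. (Y w, c)) differentiable (at w)"
    using has_derivative_Pair[OF pd_works[OF assms(2)] has_derivative_const[of c]] unfolding differentiable_def by blast
  show ?thesis by (rule diff_bilin_at[OF bounded_bilinear_scaleR dS dP])
qed

lemma pd_fb:
  fixes g :: "complex \<Rightarrow> L3"
  assumes "g differentiable (at w)"
  shows "pd d (\<lambda>w. (- a, 0) - (2 * lor3 a (g w)) *\<^sub>R (g w, 1::real)) w
     = - ((2 * lor3 a (pd d g w)) *\<^sub>R (g w, 1)) - (2 * lor3 a (g w)) *\<^sub>R (pd d g w, 0)"
proof -
  have "pd d (\<lambda>w. (- a, 0) - (2 * lor3 a (g w)) *\<^sub>R (g w, 1)) w
      = pd d (\<lambda>w. (- a, 0::real)) w - pd d (\<lambda>w. (2 * lor3 a (g w)) *\<^sub>R (g w, 1::real)) w"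
    by (rule pd_diff[OF differentiable_const dSP[OF assms assms]])
  also have "\<dots> = 0 - ((2 * lor3 a (pd d g w)) *\<^sub>R (g w, 1) + (2 * lor3 a (g w)) *\<^sub>R (pd d g w, 0))"
    by (simp only: pd_const pd_SP[OF assms assms])
  also have "\<dots> = - ((2 * lor3 a (pd d g w)) *\<^sub>R (g w, 1)) - (2 * lor3 a (g w)) *\<^sub>R (pd d g w, 0)"
    by (simp only: diff_0 minus_add_distrib diff_conv_add_uminus add_0_left)
  finally show ?thesis .
qed

lemma pd2_fb:
  fixes g :: "complex \<Rightarrow> L3"
  assumes \<Omega>: "open \<Omega>" and w: "w \<in> \<Omega>" and sg: "smooth_on \<Omega> g"
  shows "pd d (pd d (\<lambda>w. (- a, 0) - (2 * lor3 a (g w)) *\<^sub>R (g w, 1::real))) w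
     = - ((2 * lor3 a (pd d (pd d g) w)) *\<^sub>R (g w, 1)) - (4 * lor3 a (pd d g w)) *\<^sub>R (pd d g w, 0)
       - (2 * lor3 a (g w)) *\<^sub>R (pd d (pd d g) w, 0)"
proof -
  have dg: "g differentiable (at v)" if "v \<in> \<Omega>" for v using smooth_at[OF sg \<Omega> that] .
  have dgd: "pd d g differentiable (at v)" if "v \<in> \<Omega>" for v using smooth_at[OF smooth_pd[OF sg] \<Omega> that] .
  define F1 where "F1 v = - ((2 * lor3 a (pd d g v)) *\<^sub>R (g v, 1::real)) - (2 * lor3 a (g v)) *\<^sub>R (pd d g v, 0::real)" for v
  have "pd d (pd d (\<lambda>w. (- a, 0) - (2 * lor3 a (g w)) *\<^sub>R (g w, 1))) w = pd d F1 w"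
    by (rule pd_local[OF \<Omega> w], unfold F1_def, rule pd_fb[OF dg], assumption)
  also have "pd d F1 w = - pd d (\<lambda>v. (2 * lor3 a (pd d g v)) *\<^sub>R (g v, 1::real)) w
        - pd d (\<lambda>v. (2 * lor3 a (g v)) *\<^sub>R (pd d g v, 0::real)) w"
  proof -
    have "pd d F1 w = pd d (\<lambda>v. - ((2 * lor3 a (pd d g v)) *\<^sub>R (g v, 1::real))) w
        - pd d (\<lambda>v. (2 * lor3 a (g v)) *\<^sub>R (pd d g v, 0::real)) w"
      unfolding F1_def
      by (rule pd_diff[OF diff_lin_at[OF bounded_linear_minus[OF bounded_linear_ident] dSP[OF dgd[OF w] dg[OF w]]] dSP[OF dg[OF w] dgd[OF w]]])
    also have "pd d (\<lambda>v. - ((2 * lor3 a (pd d g v)) *\<^sub>R (g v, 1::real))) w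
        = - pd d (\<lambda>v. (2 * lor3 a (pd d g v)) *\<^sub>R (g v, 1::real)) w"
      by (rule pd_lin[OF bounded_linear_minus[OF bounded_linear_ident] dSP[OF dgd[OF w] dg[OF w]]])
    finally show ?thesis .
  qed
  also have "\<dots> = - ((2 * lor3 a (pd d (pd d g) w)) *\<^sub>R (g w, 1) + (2 * lor3 a (pd d g w)) *\<^sub>R (pd d g w, 0))
       - ((2 * lor3 a (pd d g w)) *\<^sub>R (pd d g w, 0) + (2 * lor3 a (g w)) *\<^sub>R (pd d (pd d g) w, 0))"
    by (simp only: pd_SP[OF dgd[OF w] dg[OF w]] pd_SP[OF dg[OF w] dgd[OF w]])
  also have "\<dots> = - ((2 * lor3 a (pd d (pd d g) w)) *\<^sub>R (g w, 1)) - (4 * lor3 a (pd d g w)) *\<^sub>R (pd d g w, 0)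
       - (2 * lor3 a (g w)) *\<^sub>R (pd d (pd d g) w, 0)"
  proof -
    have "(2 * lor3 a (pd d g w)) *\<^sub>R (pd d g w, 0::real) + (2 * lor3 a (pd d g w)) *\<^sub>R (pd d g w, 0)
        = (4 * lor3 a (pd d g w)) *\<^sub>R (pd d g w, 0)"
      by (simp add: scaleR_left_distrib[symmetric])
    then show ?thesis by (simp add: algebra_simps)
  qed
  finally show ?thesis .
qed

lemma cig_chart:
  assumes "conformal_immersion_H2 A G" "(U,\<phi>) \<in> A" "w \<in> \<phi> ` U"
  shows "lor3 (pd 1 (loc G U \<phi>) w) (pd 1 (loc G U \<phi>) w) > 0"
proof -
  have "\<forall>(U,\<phi>)\<in>A. \<forall>z\<in>\<phi> ` U. lor3 (pd 1 (loc G U \<phi>) z) (pd 1 (loc G U \<phi>) z) > 0"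
    using assms(1) unfolding conformal_immersion_H2_def by blast
  from bspec[OF this assms(2)] show ?thesis using assms(3) unfolding prod.case by blast
qed

lemma chart_b:
  fixes G :: "'a::t2_space \<Rightarrow> L3"
  assumes rs: "riemann_surface A" and cig: "conformal_immersion_H2 A G" and aH: "a \<in> H2"
    and ch: "(U,\<phi>) \<in> A" and wO: "w \<in> \<phi> ` U"
  defines "f \<equiv> loc (\<lambda>p. (- a, 0) - (2 * lor3 a (G p)) *\<^sub>R (G p, 1::real)) U \<phi>"
  shows "lor4 (pd 1 f w) (pd 1 f w) = lor4 (pd \<i> f w) (pd \<i> f w) \<and> lor4 (pd 1 f w) (pd \<i> f w) = 0
          \<and> lor4 (pd 1 f w) (pd 1 f w) > 0"
    and "\<And>\<eta>. unit_normal f w \<eta> \<Longrightarrow> snd \<eta> \<noteq> 0"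
    and "\<And>\<eta>. unit_normal f w \<eta> \<Longrightarrow> snd \<eta> > 0 \<Longrightarrow> mean_curv f w \<eta> = 1/2"
    and "\<And>\<eta>. unit_normal f w \<eta> \<Longrightarrow> snd \<eta> > 0 \<Longrightarrow>
            (loc G U \<phi> w, 1) = (1 / snd \<eta>) *\<^sub>R (\<eta> + (fst (f w), 0))"
proof -
  define \<Omega> where "\<Omega> = \<phi> ` U"
  define g where "g = loc G U \<phi>"
  have \<Omega>: "open \<Omega>" using chart_facts[OF rs ch] by (simp add: \<Omega>_def)
  have w: "w \<in> \<Omega>" using wO by (simp add: \<Omega>_def)
  have cg: "conformal_H2 A G" using cig by (simp add: conformal_immersion_H2_def)
  have sg: "smooth_on \<Omega> g" using cg_chart[OF cg ch] by (simp add: g_def \<Omega>_def)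
  have confg: "lor3 (pd 1 g w) (pd 1 g w) = lor3 (pd \<i> g w) (pd \<i> g w)" "lor3 (pd 1 g w) (pd \<i> g w) = 0"
    using cg_chart[OF cg ch] wO unfolding g_def by auto
  have mupos: "lor3 (pd 1 g w) (pd 1 g w) > 0" using cig_chart[OF cig ch wO] by (simp add: g_def)
  have fe: "f = (\<lambda>w. (- a, 0) - (2 * lor3 a (g w)) *\<^sub>R (g w, 1::real))"
    by (simp add: f_def g_def loc_def[abs_def] comp_def)
  have GH2: "g v \<in> H2" for v using cg by (simp add: conformal_H2_def g_def loc_def)
  have gg: "lor3 (g v) (g v) = -1" for v using GH2[of v] by (simp add: H2_def)
  have aa: "lor3 a a = -1" using aH by (simp add: H2_def)
  have dg: "g differentiable (at v)" if "v \<in> \<Omega>" for v using smooth_at[OF sg \<Omega> that] .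
  have dgd: "pd d g differentiable (at v)" if "v \<in> \<Omega>" for v d using smooth_at[OF smooth_pd[OF sg] \<Omega> that] .
  have g1: "lor3 (g v) (pd d g v) = 0" if "v \<in> \<Omega>" for v d
  proof -
    have c: "(\<lambda>v. lor3 (g v) (g v)) = (\<lambda>v. -1)" using gg by auto
    have "0 = pd d (\<lambda>v. lor3 (g v) (g v)) v" by (simp add: c)
    also have "\<dots> = lor3 (pd d g v) (g v) + lor3 (g v) (pd d g v)" by (rule pd_lor3[OF dg[OF that] dg[OF that]])
    finally show ?thesis by (simp add: lor3_sym[of "pd d g v"])
  qed
  have g2: "lor3 (g w) (pd d (pd d g) w) = - lor3 (pd d g w) (pd d g w)" for d
  proof -
    have "0 = pd d (\<lambda>v. lor3 (g v) (pd d g v)) w"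
      using pd_const_on[OF \<Omega> w, of "\<lambda>v. lor3 (g v) (pd d g v)" 0 d] g1 by simp
    also have "\<dots> = lor3 (pd d g w) (pd d g w) + lor3 (g w) (pd d (pd d g) w)"
      by (rule pd_lor3[OF dg[OF w] dgd[OF w]])
    finally show ?thesis by simp
  qed
  have tneg: "lor3 a (g w) < 0" using H2_inner_le[OF aH GH2[of w]] by simp
  note C = core_b[OF aa gg[of w] g1[OF w, of 1] g1[OF w, of \<i>] refl confg(1)[symmetric] mupos confg(2)
     g2[of 1] g2[of \<i>, unfolded confg(1)[symmetric]] refl tneg]
  have pf: "pd d f w = - ((2 * lor3 a (pd d g w)) *\<^sub>R (g w, 1)) - (2 * lor3 a (g w)) *\<^sub>R (pd d g w, 0)" for d
    unfolding fe by (rule pd_fb[OF dg[OF w]])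
  have pf2: "pd d (pd d f) w = - ((2 * lor3 a (pd d (pd d g) w)) *\<^sub>R (g w, 1)) - (4 * lor3 a (pd d g w)) *\<^sub>R (pd d g w, 0)
       - (2 * lor3 a (g w)) *\<^sub>R (pd d (pd d g) w, 0)" for d
    unfolding fe by (rule pd2_fb[OF \<Omega> w sg])
  have fstf: "fst (f w) = - a - (2 * lor3 a (g w)) *\<^sub>R g w" by (simp add: fe)
  define e0 where "e0 = (- 1 / lor3 a (g w)) *\<^sub>R (g w, 1::real) - (- a - (2 * lor3 a (g w)) *\<^sub>R g w, 0)"
  define u where "u = - 1 / lor3 a (g w)"
  show "lor4 (pd 1 f w) (pd 1 f w) = lor4 (pd \<i> f w) (pd \<i> f w) \<and> lor4 (pd 1 f w) (pd \<i> f w) = 0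
          \<and> lor4 (pd 1 f w) (pd 1 f w) > 0"
    using C(1-3) by (simp only: pf)
  have uniq: "\<exists>c. \<eta> = c *\<^sub>R e0 \<and> c * c = 1" if un: "unit_normal f w \<eta>" for \<eta>
  proof (rule normal_unique)
    show "lor4 (pd 1 f w) (pd \<i> f w) = 0" using C(2) by (simp only: pf)
    show "lor4 (pd 1 f w) e0 = 0" using C(5) by (simp only: pf e0_def lor4_sym[of _ "(- 1 / lor3 a (g w)) *\<^sub>R (g w, 1::real) - (- a - (2 * lor3 a (g w)) *\<^sub>R g w, 0)"])
    show "lor4 (pd \<i> f w) e0 = 0" using C(6) by (simp only: pf e0_def lor4_sym[of _ "(- 1 / lor3 a (g w)) *\<^sub>R (g w, 1::real) - (- a - (2 * lor3 a (g w)) *\<^sub>R g w, 0)"])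
    show "lor4 (pd 1 f w) (fst (f w), 0) = 0" using C(9) by (simp only: pf fstf)
    show "lor4 (pd \<i> f w) (fst (f w), 0) = 0" using C(10) by (simp only: pf fstf)
    show "lor4 e0 (fst (f w), 0) = 0" using C(7) by (simp only: e0_def fstf)
    show "lor4 (pd 1 f w) (pd 1 f w) \<noteq> 0" using C(3) unfolding pf by (metis less_irrefl)
    show "lor4 (pd \<i> f w) (pd \<i> f w) \<noteq> 0" using C(1,3) unfolding pf by (metis less_irrefl)
    show "lor4 e0 e0 = 1" using C(8) by (simp only: e0_def)
    show "lor4 (fst (f w), 0) (fst (f w), 0) \<noteq> 0" using C(11) unfolding fstf by (metis zero_neq_neg_one)
  qed (use un in \<open>auto simp: unit_normal_def\<close>)
  have se0: "snd e0 = u" using C(12) by (simp only: e0_def u_def)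
  have upos: "u > 0" using C(13) by (simp only: u_def)
  show "snd \<eta> \<noteq> 0" if un: "unit_normal f w \<eta>" for \<eta>
  proof -
    obtain c where c: "\<eta> = c *\<^sub>R e0" "c * c = 1" using uniq[OF un] by blast
    then have "c \<noteq> 0" by auto
    then show ?thesis using c se0 upos by simp
  qed
  have eq: "\<eta> = e0" if un: "unit_normal f w \<eta>" and sp: "snd \<eta> > 0" for \<eta>
  proof -
    obtain c where c: "\<eta> = c *\<^sub>R e0" "c * c = 1" using uniq[OF un] by blast
    then have "c * u > 0" using sp se0 by simp
    then have "c > 0" using upos by (simp add: zero_less_mult_iff)
    then have "c = 1" using c(2) by (metis mult_cancel_right1 mult_left_cancel not_one_less_zero zero_less_one nle_le mult_le_cancel_left1 less_eq_real_def mult_less_cancel_left1 mult_less_cancel_left2)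
    then show ?thesis using c by simp
  qed
  have lp: "lor4 (pd 1 f w) (pd 1 f w) > 0" using C(3) by (simp only: pf)
  show "mean_curv f w \<eta> = 1/2" if "unit_normal f w \<eta>" "snd \<eta> > 0" for \<eta>
  proof -
    have "lor4 (lap f w) e0 = lor4 (pd 1 f w) (pd 1 f w)"
      using C(14) by (simp only: lap_def pf pf2 e0_def)
    then show ?thesis using eq[OF that] lp by (simp add: mean_curv_def)
  qed
  show "(loc G U \<phi> w, 1) = (1 / snd \<eta>) *\<^sub>R (\<eta> + (fst (f w), 0))" if "unit_normal f w \<eta>" "snd \<eta> > 0" for \<eta>
  proof -
    have "\<eta> + (fst (f w), 0) = u *\<^sub>R (g w, 1)" using eq[OF that] by (simp add: e0_def fstf u_def)
    then show ?thesis using eq[OF that] se0 upos by (simp add: g_def)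
  qed
qed

lemma N_H2:
  assumes aH: "a \<in> H2" and yH: "y \<in> H2"
  shows "- a - (2 * lor3 a y) *\<^sub>R y \<in> H2"
proof -
  define t where "t = lor3 a y"
  have aa: "lor3 a a = -1" and yy: "lor3 y y = -1" using aH yH by (simp_all add: H2_def)
  have ya: "lor3 y a = t" using lor3_sym[of y a] by (simp add: t_def)
  have NN: "lor3 (- a - (2 * t) *\<^sub>R y) (- a - (2 * t) *\<^sub>R y) = -1"
  proof -
    have "lor3 (- a - (2 * t) *\<^sub>R y) (- a - (2 * t) *\<^sub>R y) = lor3 a a + 2 * t * lor3 a y + 2 * t * lor3 y a + 4 * t * t * lor3 y y"
      by (simp add: algebra_simps)
    then show ?thesis using aa yy ya by (simp add: t_def[symmetric])
  qed
  have Ny: "lor3 (- a - (2 * t) *\<^sub>R y) y = t" using yy by (simp add: t_def)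
  have "t < 0" using H2_inner_le[OF aH yH] by (simp add: t_def)
  then have "fst (- a - (2 * t) *\<^sub>R y) > 0" using timelike_fst_pos[OF NN yH] Ny by simp
  then show ?thesis using NN by (simp add: H2_def t_def)
qed

lemma part_b:
  fixes G :: "'a::t2_space \<Rightarrow> L3"
  assumes rs: "riemann_surface A" and cig: "conformal_immersion_H2 A G" and aH: "a \<in> H2"
  shows "let \<psi> = (\<lambda>p. (- a, 0) - (2 * lor3 a (G p)) *\<^sub>R (G p, 1)) in
          conformal_immersion_H2R A \<psi> \<and> regular_vertical_projection A \<psi> \<and>
          cmc_canonical A \<psi> (1/2) \<and> hyperbolic_gauss_map A \<psi> G"
proof -
  define \<psi> where "\<psi> = (\<lambda>p. (- a, 0) - (2 * lor3 a (G p)) *\<^sub>R (G p, 1::real))"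
  have cg: "conformal_H2 A G" using cig by (simp add: conformal_immersion_H2_def)
  have GH2: "G p \<in> H2" for p using cg by (simp add: conformal_H2_def)
  have c1: "fst (\<psi> p) \<in> H2" for p using N_H2[OF aH GH2[of p]] by (simp add: \<psi>_def)
  have smooth: "smooth_on (\<phi> ` U) (loc \<psi> U \<phi>)" if ch: "(U,\<phi>) \<in> A" for U \<phi>
  proof -
    define g where "g = loc G U \<phi>"
    have \<Omega>: "open (\<phi> ` U)" using chart_facts[OF rs ch] by simp
    have sg: "smooth_on (\<phi> ` U) g" using cg_chart[OF cg ch] by (simp add: g_def)
    have s1: "smooth_on (\<phi> ` U) (\<lambda>w. 2 * lor3 a (g w))" by (rule smooth_lin[OF \<Omega> bl_2lor3 sg])
    have s2: "smooth_on (\<phi> ` U) (\<lambda>w. (g w, 1::real))" by (rule smooth_pair_const[OF \<Omega> sg])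
    have s3: "smooth_on (\<phi> ` U) (\<lambda>w. (2 * lor3 a (g w)) *\<^sub>R (g w, 1::real))"
      by (rule smooth_bilin[OF \<Omega> bounded_bilinear_scaleR s1 s2])
    have s4: "smooth_on (\<phi> ` U) (\<lambda>w. - ((2 * lor3 a (g w)) *\<^sub>R (g w, 1::real)))"
      by (rule smooth_lin[OF \<Omega> bounded_linear_minus[OF bounded_linear_ident] s3])
    have s5: "smooth_on (\<phi> ` U) (\<lambda>w. (- a, 0::real) + - ((2 * lor3 a (g w)) *\<^sub>R (g w, 1::real)))"
      by (rule smooth_add[OF \<Omega> smooth_const s4])
    have fe: "loc \<psi> U \<phi> = (\<lambda>w. (- a, 0::real) + - ((2 * lor3 a (g w)) *\<^sub>R (g w, 1::real)))"
      unfolding \<psi>_def g_def loc_def[abs_def] comp_def by (simp only: diff_conv_add_uminus)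
    show ?thesis using s5 by (simp only: fe)
  qed
  have "conformal_immersion_H2R A \<psi>"
    unfolding conformal_immersion_H2R_def Let_def
  proof (intro conjI allI ballI c1)
    fix x assume "x \<in> A"
    then obtain U \<phi> where x: "x = (U,\<phi>)" and ch: "(U,\<phi>) \<in> A" by (cases x) auto
    show "case x of (U, \<phi>) \<Rightarrow> smooth_on (\<phi> ` U) (loc \<psi> U \<phi>) \<and>
            (\<forall>z\<in>\<phi> ` U. lor4 (pd 1 (loc \<psi> U \<phi>) z) (pd 1 (loc \<psi> U \<phi>) z) = lor4 (pd \<i> (loc \<psi> U \<phi>) z) (pd \<i> (loc \<psi> U \<phi>) z) \<and>
                lor4 (pd 1 (loc \<psi> U \<phi>) z) (pd \<i> (loc \<psi> U \<phi>) z) = 0 \<and>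
                0 < lor4 (pd 1 (loc \<psi> U \<phi>) z) (pd 1 (loc \<psi> U \<phi>) z))"
      unfolding x prod.case
      using smooth[OF ch] chart_b(1)[OF rs cig aH ch] unfolding \<psi>_def by blast
  qed
  moreover have "regular_vertical_projection A \<psi>"
    unfolding regular_vertical_projection_def
  proof (intro ballI)
    fix x assume "x \<in> A"
    then obtain U \<phi> where x: "x = (U,\<phi>)" and ch: "(U,\<phi>) \<in> A" by (cases x) auto
    show "case x of (U, \<phi>) \<Rightarrow> \<forall>z\<in>\<phi> ` U. \<forall>\<eta>. unit_normal (loc \<psi> U \<phi>) z \<eta> \<longrightarrow> snd \<eta> \<noteq> 0"
      unfolding x prod.case using chart_b(2)[OF rs cig aH ch] unfolding \<psi>_def by blast
  qed
  moreover have "cmc_canonical A \<psi> (1/2)"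
    unfolding cmc_canonical_def
  proof (intro ballI)
    fix x assume "x \<in> A"
    then obtain U \<phi> where x: "x = (U,\<phi>)" and ch: "(U,\<phi>) \<in> A" by (cases x) auto
    show "case x of (U, \<phi>) \<Rightarrow> \<forall>z\<in>\<phi> ` U. \<forall>\<eta>. unit_normal (loc \<psi> U \<phi>) z \<eta> \<and> 0 < snd \<eta> \<longrightarrow> mean_curv (loc \<psi> U \<phi>) z \<eta> = 1/2"
      unfolding x prod.case using chart_b(3)[OF rs cig aH ch] unfolding \<psi>_def by blast
  qed
  moreover have "hyperbolic_gauss_map A \<psi> G"
    unfolding hyperbolic_gauss_map_def
  proof (intro ballI)
    fix x assume "x \<in> A"
    then obtain U \<phi> where x: "x = (U,\<phi>)" and ch: "(U,\<phi>) \<in> A" by (cases x) auto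
    have inj: "inj_on \<phi> U" using chart_facts[OF rs ch] by simp
    show "case x of (U, \<phi>) \<Rightarrow> \<forall>p\<in>U. \<forall>\<eta>. unit_normal (loc \<psi> U \<phi>) (\<phi> p) \<eta> \<and> 0 < snd \<eta> \<longrightarrow>
             (G p, 1) = (1 / snd \<eta>) *\<^sub>R (\<eta> + (fst (\<psi> p), 0))"
      unfolding x prod.case
    proof (intro ballI allI impI)
      fix p \<eta> assume p: "p \<in> U" and h: "unit_normal (loc \<psi> U \<phi>) (\<phi> p) \<eta> \<and> 0 < snd \<eta>"
      have pO: "\<phi> p \<in> \<phi> ` U" using p by simp
      have "(loc G U \<phi> (\<phi> p), 1) = (1 / snd \<eta>) *\<^sub>R (\<eta> + (fst (loc \<psi> U \<phi> (\<phi> p)), 0))"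
        using chart_b(4)[OF rs cig aH ch pO, of \<eta>] h unfolding \<psi>_def by blast
      moreover have "loc G U \<phi> (\<phi> p) = G p" "loc \<psi> U \<phi> (\<phi> p) = \<psi> p"
        using inj p by (simp_all add: loc_def the_inv_into_f_f)
      ultimately show "(G p, 1) = (1 / snd \<eta>) *\<^sub>R (\<eta> + (fst (\<psi> p), 0))" by simp
    qed
  qed
  ultimately show ?thesis unfolding \<psi>_def Let_def by blast
qed

theorem mainTheorem12:
  fixes A :: "('a::t2_space set \<times> ('a \<Rightarrow> complex)) set"
  assumes "riemann_surface A"
    and "connected (UNIV :: 'a set)"
  shows
   "(\<forall>(\<psi> :: 'a \<Rightarrow> L4) (G :: 'a \<Rightarrow> L3).
       conformal_immersion_H2R A \<psi> \<and> regular_vertical_projection A \<psi> \<and>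
       cmc_canonical A \<psi> (1/2) \<and> hyperbolic_gauss_map A \<psi> G \<and> conformal_H2 A G
       \<longrightarrow> (\<exists>a\<in>H2. \<exists>c::real. \<forall>p.
              \<psi> p = (- a, c) - (2 * lor3 a (G p)) *\<^sub>R (G p, 1)))
    \<and>
    (\<forall>(G :: 'a \<Rightarrow> L3) a.
       conformal_immersion_H2 A G \<and> a \<in> H2 \<longrightarrow>
       (let \<psi> = (\<lambda>p. (- a, 0) - (2 * lor3 a (G p)) *\<^sub>R (G p, 1)) in
          conformal_immersion_H2R A \<psi> \<and> regular_vertical_projection A \<psi> \<and>
          cmc_canonical A \<psi> (1/2) \<and> hyperbolic_gauss_map A \<psi> G))"
proof (intro conjI allI impI)
  fix \<psi> :: "'a \<Rightarrow> L4" and G :: "'a \<Rightarrow> L3"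
  assume h: "conformal_immersion_H2R A \<psi> \<and> regular_vertical_projection A \<psi> \<and>
       cmc_canonical A \<psi> (1/2) \<and> hyperbolic_gauss_map A \<psi> G \<and> conformal_H2 A G"
  show "\<exists>a\<in>H2. \<exists>c::real. \<forall>p. \<psi> p = (- a, c) - (2 * lor3 a (G p)) *\<^sub>R (G p, 1)"
    using part_a[OF assms(1,2)] h by blast
next
  fix G :: "'a \<Rightarrow> L3" and a
  assume h: "conformal_immersion_H2 A G \<and> a \<in> H2"
  then show "let \<psi> = (\<lambda>p. (- a, 0) - (2 * lor3 a (G p)) *\<^sub>R (G p, 1)) in
          conformal_immersion_H2R A \<psi> \<and> regular_vertical_projection A \<psi> \<and>
          cmc_canonical A \<psi> (1/2) \<and> hyperbolic_gauss_map A \<psi> G"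
    using part_b[OF assms(1)] by blast
qed


end
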